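(* Let $C$ be a Reedy category. The fully faithful functor $\mathrm{Down}(C)\hookrightarrow\mathrm{Down}_*(C)$ induced by the inclusion $\int N^{--,+}_+(C)\subseteq\int N^{-,+}(C)$ is an equivalence of categories.
   Context: A Reedy category $(C,C_-,C_+)$: wide subcategories with unique factorization of every morphism as ($C_-$ then $C_+$), membership in $C_\pm$ decidable, and the relation ($x<'y$ iff non-identity $x\to y$ in $C_+$ or non-identity $y\to x$ in $C_-$) well-founded. $\Delta$: finite ordinals $[n]$ and order-preserving maps. $\int N^{-,+}(C)$: objects $([n],X)$ with $X\colon[n]\to C$ a functor sending all morphisms into $C_-$; morphisms $([m],X)\to([n],Y)$ are $(\alpha,\theta)$ with $\alpha\colon[m]\to[n]$ in $\Delta$ and $\theta\colon X\Rightarrow Y\circ\alpha$ with all components in $C_+$; composition $(\beta,\varphi)\circ(\alpha,\theta)=(\beta\alpha,(\varphi\alpha)\circ\theta)$. $\int N^{--,+}_+(C)$: the full subcategory on objects whose $X$ reflects identities. Order on hom-sets: $(\alpha,\theta)\le(\alpha',\theta')$ iff $\alpha\le\alpha'$ pointwise and $\theta'_i=Y(\alpha(i)\le\alpha'(i))\circ\theta_i$ for all $i$ (compatible with composition). $\mathrm{Down}_*(C)$ and $\mathrm{Down}(C)$ are obtained from $\int N^{-,+}(C)$ and $\int N^{--,+}_+(C)$ by quotienting each hom-set by the equivalence relation generated by $\le$. *)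

theory Defs
  imports Main
begin

record ('o, 'm) cat =
  c_obj :: "'o set"
  c_arr :: "'m set"
  c_dom :: "'m \<Rightarrow> 'o"
  c_cod :: "'m \<Rightarrow> 'o"
  c_comp :: "'m \<Rightarrow> 'm \<Rightarrow> 'm"   (* c_comp g f = g o f *)
  c_id :: "'o \<Rightarrow> 'm"

definition category :: "('o, 'm) cat \<Rightarrow> bool" where
  "category C \<longleftrightarrow>
     (\<forall>f\<in>c_arr C. c_dom C f \<in> c_obj C \<and> c_cod C f \<in> c_obj C) \<and>
     (\<forall>x\<in>c_obj C. c_id C x \<in> c_arr C \<and> c_dom C (c_id C x) = x \<and> c_cod C (c_id C x) = x) \<and>
     (\<forall>f\<in>c_arr C. \<forall>g\<in>c_arr C. c_cod C f = c_dom C g \<longrightarrow>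
        c_comp C g f \<in> c_arr C \<and> c_dom C (c_comp C g f) = c_dom C f \<and>
        c_cod C (c_comp C g f) = c_cod C g) \<and>
     (\<forall>f\<in>c_arr C. c_comp C (c_id C (c_cod C f)) f = f \<and> c_comp C f (c_id C (c_dom C f)) = f) \<and>
     (\<forall>f\<in>c_arr C. \<forall>g\<in>c_arr C. \<forall>h\<in>c_arr C. c_cod C f = c_dom C g \<longrightarrow> c_cod C g = c_dom C h \<longrightarrow>
        c_comp C h (c_comp C g f) = c_comp C (c_comp C h g) f)"

definition "functor" :: "('o, 'm) cat \<Rightarrow> ('p, 'n) cat \<Rightarrow> ('o \<Rightarrow> 'p) \<Rightarrow> ('m \<Rightarrow> 'n) \<Rightarrow> bool" where
  "functor C D Fo Fm \<longleftrightarrow> category C \<and> category D \<and>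
     (\<forall>x\<in>c_obj C. Fo x \<in> c_obj D) \<and>
     (\<forall>f\<in>c_arr C. Fm f \<in> c_arr D \<and> c_dom D (Fm f) = Fo (c_dom C f) \<and> c_cod D (Fm f) = Fo (c_cod C f)) \<and>
     (\<forall>x\<in>c_obj C. Fm (c_id C x) = c_id D (Fo x)) \<and>
     (\<forall>f\<in>c_arr C. \<forall>g\<in>c_arr C. c_cod C f = c_dom C g \<longrightarrow> Fm (c_comp C g f) = c_comp D (Fm g) (Fm f))"

definition iso_arr :: "('o, 'm) cat \<Rightarrow> 'm \<Rightarrow> bool" where
  "iso_arr C f \<longleftrightarrow> f \<in> c_arr C \<and> (\<exists>g\<in>c_arr C. c_dom C g = c_cod C f \<and> c_cod C g = c_dom C f \<and>
     c_comp C g f = c_id C (c_dom C f) \<and> c_comp C f g = c_id C (c_cod C f))"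

definition nat_iso :: "('o, 'm) cat \<Rightarrow> ('p, 'n) cat \<Rightarrow> ('o \<Rightarrow> 'p) \<Rightarrow> ('m \<Rightarrow> 'n)
     \<Rightarrow> ('o \<Rightarrow> 'p) \<Rightarrow> ('m \<Rightarrow> 'n) \<Rightarrow> ('o \<Rightarrow> 'n) \<Rightarrow> bool" where
  "nat_iso C D Fo Fm Go Gm eta \<longleftrightarrow> functor C D Fo Fm \<and> functor C D Go Gm \<and>
     (\<forall>x\<in>c_obj C. iso_arr D (eta x) \<and> c_dom D (eta x) = Fo x \<and> c_cod D (eta x) = Go x) \<and>
     (\<forall>f\<in>c_arr C. c_comp D (Gm f) (eta (c_dom C f)) = c_comp D (eta (c_cod C f)) (Fm f))"

definition equivalence :: "('o, 'm) cat \<Rightarrow> ('p, 'n) cat \<Rightarrow> ('o \<Rightarrow> 'p) \<Rightarrow> ('m \<Rightarrow> 'n) \<Rightarrow> bool" where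
  "equivalence C D Fo Fm \<longleftrightarrow> functor C D Fo Fm \<and>
     (\<exists>Go Gm eta eps. functor D C Go Gm \<and>
        nat_iso C C (\<lambda>x. x) (\<lambda>f. f) (Go \<circ> Fo) (Gm \<circ> Fm) eta \<and>
        nat_iso D D (Fo \<circ> Go) (Fm \<circ> Gm) (\<lambda>x. x) (\<lambda>f. f) eps)"

definition wide_subcat :: "('o, 'm) cat \<Rightarrow> 'm set \<Rightarrow> bool" where
  "wide_subcat C S \<longleftrightarrow> S \<subseteq> c_arr C \<and> (\<forall>x\<in>c_obj C. c_id C x \<in> S) \<and>
     (\<forall>f\<in>S. \<forall>g\<in>S. c_cod C f = c_dom C g \<longrightarrow> c_comp C g f \<in> S)"

definition reedy_rel :: "('o, 'm) cat \<Rightarrow> 'm set \<Rightarrow> 'm set \<Rightarrow> 'o \<Rightarrow> 'o \<Rightarrow> bool" where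
  "reedy_rel C Cm Cp x y \<longleftrightarrow> x \<in> c_obj C \<and> y \<in> c_obj C \<and>
     ((\<exists>f\<in>Cp. c_dom C f = x \<and> c_cod C f = y \<and> f \<noteq> c_id C x) \<or>
      (\<exists>f\<in>Cm. c_dom C f = y \<and> c_cod C f = x \<and> f \<noteq> c_id C y))"

text \<open>Membership in Cm, Cp is decidable classically; no extra condition is needed in HOL.\<close>
definition reedy :: "('o, 'm) cat \<Rightarrow> 'm set \<Rightarrow> 'm set \<Rightarrow> bool" where
  "reedy C Cm Cp \<longleftrightarrow> category C \<and> wide_subcat C Cm \<and> wide_subcat C Cp \<and>
     (\<forall>f\<in>c_arr C. \<exists>!pq. fst pq \<in> Cm \<and> snd pq \<in> Cp \<and> c_cod C (fst pq) = c_dom C (snd pq) \<and>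
         c_comp C (snd pq) (fst pq) = f) \<and>
     wfP (reedy_rel C Cm Cp)"

text \<open>Object ([n], X): X given by its object part Xo i (i \<le> n) and its action Xm i j on
  the unique arrow i \<le> j of [n]; extensional (undefined) outside the range.\<close>
type_synonym ('o, 'm) nobj = "nat \<times> (nat \<Rightarrow> 'o) \<times> (nat \<Rightarrow> nat \<Rightarrow> 'm)"

text \<open>Morphism (source, target, alpha, theta), extensional outside [m].\<close>
type_synonym ('o, 'm) nmor = "('o, 'm) nobj \<times> ('o, 'm) nobj \<times> (nat \<Rightarrow> nat) \<times> (nat \<Rightarrow> 'm)"

definition nerve_obj :: "('o, 'm) cat \<Rightarrow> 'm set \<Rightarrow> ('o, 'm) nobj \<Rightarrow> bool" where
  "nerve_obj C Cm A \<longleftrightarrow> (case A of (n, Xo, Xm) \<Rightarrow>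
     (\<forall>i\<le>n. Xo i \<in> c_obj C) \<and> (\<forall>i>n. Xo i = undefined) \<and>
     (\<forall>i j. i \<le> j \<and> j \<le> n \<longrightarrow> Xm i j \<in> Cm \<and> c_dom C (Xm i j) = Xo i \<and> c_cod C (Xm i j) = Xo j) \<and>
     (\<forall>i j. \<not> (i \<le> j \<and> j \<le> n) \<longrightarrow> Xm i j = undefined) \<and>
     (\<forall>i\<le>n. Xm i i = c_id C (Xo i)) \<and>
     (\<forall>i j k. i \<le> j \<and> j \<le> k \<and> k \<le> n \<longrightarrow> c_comp C (Xm j k) (Xm i j) = Xm i k))"

definition reflects_ids :: "('o, 'm) cat \<Rightarrow> ('o, 'm) nobj \<Rightarrow> bool" where
  "reflects_ids C A \<longleftrightarrow> (case A of (n, Xo, Xm) \<Rightarrow>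
     (\<forall>i j. i \<le> j \<and> j \<le> n \<and> (\<exists>y\<in>c_obj C. Xm i j = c_id C y) \<longrightarrow> i = j))"

definition nerve_mor :: "('o, 'm) cat \<Rightarrow> 'm set \<Rightarrow> 'm set \<Rightarrow> ('o, 'm) nmor \<Rightarrow> bool" where
  "nerve_mor C Cm Cp f \<longleftrightarrow> (case f of ((m, Xo, Xm), (n, Yo, Ym), \<alpha>, \<theta>) \<Rightarrow>
     nerve_obj C Cm (m, Xo, Xm) \<and> nerve_obj C Cm (n, Yo, Ym) \<and>
     (\<forall>i\<le>m. \<alpha> i \<le> n) \<and> (\<forall>i j. i \<le> j \<and> j \<le> m \<longrightarrow> \<alpha> i \<le> \<alpha> j) \<and>
     (\<forall>i>m. \<alpha> i = undefined) \<and> (\<forall>i>m. \<theta> i = undefined) \<and>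
     (\<forall>i\<le>m. \<theta> i \<in> Cp \<and> c_dom C (\<theta> i) = Xo i \<and> c_cod C (\<theta> i) = Yo (\<alpha> i)) \<and>
     (\<forall>i j. i \<le> j \<and> j \<le> m \<longrightarrow> c_comp C (Ym (\<alpha> i) (\<alpha> j)) (\<theta> i) = c_comp C (\<theta> j) (Xm i j)))"

definition nerve_comp :: "('o, 'm) cat \<Rightarrow> ('o, 'm) nmor \<Rightarrow> ('o, 'm) nmor \<Rightarrow> ('o, 'm) nmor" where
  "nerve_comp C g f = (case f of (A, B, \<alpha>, \<theta>) \<Rightarrow> (case g of (B', D, \<beta>, \<phi>) \<Rightarrow>
     (A, D, (\<lambda>i. if i \<le> fst A then \<beta> (\<alpha> i) else undefined),
            (\<lambda>i. if i \<le> fst A then c_comp C (\<phi> (\<alpha> i)) (\<theta> i) else undefined))))"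

definition nerve_id :: "('o, 'm) cat \<Rightarrow> ('o, 'm) nobj \<Rightarrow> ('o, 'm) nmor" where
  "nerve_id C A = (case A of (n, Xo, Xm) \<Rightarrow>
     (A, A, (\<lambda>i. if i \<le> n then i else undefined), (\<lambda>i. if i \<le> n then c_id C (Xo i) else undefined)))"

definition int_N :: "('o, 'm) cat \<Rightarrow> 'm set \<Rightarrow> 'm set \<Rightarrow> (('o, 'm) nobj, ('o, 'm) nmor) cat" where
  "int_N C Cm Cp = \<lparr> c_obj = {A. nerve_obj C Cm A},
                     c_arr = {f. nerve_mor C Cm Cp f},
                     c_dom = (\<lambda>f. fst f), c_cod = (\<lambda>f. fst (snd f)),
                     c_comp = nerve_comp C, c_id = nerve_id C \<rparr>"

definition int_N_plus :: "('o, 'm) cat \<Rightarrow> 'm set \<Rightarrow> 'm set \<Rightarrow> (('o, 'm) nobj, ('o, 'm) nmor) cat" where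
  "int_N_plus C Cm Cp = \<lparr> c_obj = {A. nerve_obj C Cm A \<and> reflects_ids C A},
                     c_arr = {f. nerve_mor C Cm Cp f \<and> reflects_ids C (fst f) \<and> reflects_ids C (fst (snd f))},
                     c_dom = (\<lambda>f. fst f), c_cod = (\<lambda>f. fst (snd f)),
                     c_comp = nerve_comp C, c_id = nerve_id C \<rparr>"

definition nerve_le :: "('o, 'm) cat \<Rightarrow> ('o, 'm) nmor \<Rightarrow> ('o, 'm) nmor \<Rightarrow> bool" where
  "nerve_le C f g \<longleftrightarrow> (case f of (A, B, \<alpha>, \<theta>) \<Rightarrow> (case g of (A', B', \<alpha>', \<theta>') \<Rightarrow>
     A = A' \<and> B = B' \<and>
     (\<forall>i\<le>fst A. \<alpha> i \<le> \<alpha>' i \<and> \<theta>' i = c_comp C (snd (snd B) (\<alpha> i) (\<alpha>' i)) (\<theta> i))))"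

text \<open>Equivalence relation on the arrows of I generated by le (le relates only
  parallel arrows, so this is the hom-set-wise generated equivalence).\<close>
definition gen_equiv :: "('o, 'm) cat \<Rightarrow> ('m \<Rightarrow> 'm \<Rightarrow> bool) \<Rightarrow> 'm rel" where
  "gen_equiv I le = {(f, g). f \<in> c_arr I \<and> g \<in> c_arr I \<and> (le f g \<or> le g f)}\<^sup>*"

definition qcls :: "('o, 'm) cat \<Rightarrow> ('m \<Rightarrow> 'm \<Rightarrow> bool) \<Rightarrow> 'm \<Rightarrow> 'm set" where
  "qcls I le f = gen_equiv I le `` {f}"

definition quot_cat :: "('o, 'm) cat \<Rightarrow> ('m \<Rightarrow> 'm \<Rightarrow> bool) \<Rightarrow> ('o, 'm set) cat" where
  "quot_cat I le = \<lparr> c_obj = c_obj I,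
     c_arr = qcls I le ` c_arr I,
     c_dom = (\<lambda>E. c_dom I (SOME f. f \<in> E)),
     c_cod = (\<lambda>E. c_cod I (SOME f. f \<in> E)),
     c_comp = (\<lambda>E F. qcls I le (c_comp I (SOME f. f \<in> E) (SOME f. f \<in> F))),
     c_id = (\<lambda>x. qcls I le (c_id I x)) \<rparr>"

definition Down_star :: "('o, 'm) cat \<Rightarrow> 'm set \<Rightarrow> 'm set \<Rightarrow> (('o, 'm) nobj, ('o, 'm) nmor set) cat" where
  "Down_star C Cm Cp = quot_cat (int_N C Cm Cp) (nerve_le C)"

definition Down :: "('o, 'm) cat \<Rightarrow> 'm set \<Rightarrow> 'm set \<Rightarrow> (('o, 'm) nobj, ('o, 'm) nmor set) cat" where
  "Down C Cm Cp = quot_cat (int_N_plus C Cm Cp) (nerve_le C)"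

definition Down_incl_mor :: "('o, 'm) cat \<Rightarrow> 'm set \<Rightarrow> 'm set \<Rightarrow> ('o, 'm) nmor set \<Rightarrow> ('o, 'm) nmor set" where
  "Down_incl_mor C Cm Cp E = qcls (int_N C Cm Cp) (nerve_le C) (SOME f. f \<in> E)"

end

theory Submission
  imports Defs
begin

lemma cat_dom_cod:
  assumes "category C" "f \<in> c_arr C"
  shows "c_dom C f \<in> c_obj C" "c_cod C f \<in> c_obj C"
  using assms unfolding category_def by blast+

lemma cat_id:
  assumes "category C" "x \<in> c_obj C"
  shows "c_id C x \<in> c_arr C" "c_dom C (c_id C x) = x" "c_cod C (c_id C x) = x"
  using assms unfolding category_def by blast+

lemma cat_comp:
  assumes "category C" "f \<in> c_arr C" "g \<in> c_arr C" "c_cod C f = c_dom C g"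
  shows "c_comp C g f \<in> c_arr C" "c_dom C (c_comp C g f) = c_dom C f"
    "c_cod C (c_comp C g f) = c_cod C g"
  using assms unfolding category_def by blast+

lemma cat_idl:
  assumes "category C" "f \<in> c_arr C" "c_cod C f = y"
  shows "c_comp C (c_id C y) f = f"
  using assms unfolding category_def by blast

lemma cat_idr:
  assumes "category C" "f \<in> c_arr C" "c_dom C f = x"
  shows "c_comp C f (c_id C x) = f"
  using assms unfolding category_def by blast

lemma cat_assoc:
  assumes "category C" "f \<in> c_arr C" "g \<in> c_arr C" "h \<in> c_arr C"
    "c_cod C f = c_dom C g" "c_cod C g = c_dom C h"
  shows "c_comp C h (c_comp C g f) = c_comp C (c_comp C h g) f"
  using assms unfolding category_def by blast

lemma functor_id: "category C \<Longrightarrow> functor C C (\<lambda>x. x) (\<lambda>f. f)"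
  unfolding functor_def by (auto dest: cat_dom_cod)

lemma functor_compose:
  assumes "functor A B F Fm" "functor B D G Gm"
  shows "functor A D (G \<circ> F) (Gm \<circ> Fm)"
  using assms unfolding functor_def by auto

lemma fullsub_category:
  assumes D: "category D"
    and obj: "c_obj C \<subseteq> c_obj D"
    and arr: "c_arr C = {f\<in>c_arr D. c_dom D f \<in> c_obj C \<and> c_cod D f \<in> c_obj C}"
    and dom: "c_dom C = c_dom D" and cod: "c_cod C = c_cod D"
    and comp: "\<forall>f\<in>c_arr C. \<forall>g\<in>c_arr C. c_cod D f = c_dom D g \<longrightarrow> c_comp C g f = c_comp D g f"
    and idc: "\<forall>x\<in>c_obj C. c_id C x = c_id D x"
  shows "category C"
proof -
  have A: "f \<in> c_arr C \<longleftrightarrow> f \<in> c_arr D \<and> c_dom D f \<in> c_obj C \<and> c_cod D f \<in> c_obj C" for f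
    using arr by blast
  have I: "x \<in> c_obj C \<Longrightarrow> c_id D x \<in> c_arr C" for x
    using A obj cat_id[OF D, of x] by auto
  show ?thesis
    unfolding category_def dom cod
    apply (intro conjI ballI impI)
    subgoal using A by blast
    subgoal using A by blast
    subgoal for x using idc obj cat_id[OF D, of x] A by auto
    subgoal for x using idc obj cat_id[OF D, of x] A by auto
    subgoal for x using idc obj cat_id[OF D, of x] A by auto
    subgoal for f g using comp A cat_comp[OF D, of f g] by auto
    subgoal for f g using comp A cat_comp[OF D, of f g] by auto
    subgoal for f g using comp A cat_comp[OF D, of f g] by auto
    subgoal for f proof -
      assume f: "f \<in> c_arr C"
      then have c: "c_cod D f \<in> c_obj C" "f \<in> c_arr D" using A by auto
      then have "c_id D (c_cod D f) \<in> c_arr C" using I by auto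
      moreover have "c_dom D (c_id D (c_cod D f)) = c_cod D f" using c obj cat_id[OF D] by auto
      ultimately show ?thesis using comp f idc c cat_idl[OF D, of f] by auto
    qed
    subgoal for f proof -
      assume f: "f \<in> c_arr C"
      then have c: "c_dom D f \<in> c_obj C" "f \<in> c_arr D" using A by auto
      then have "c_id D (c_dom D f) \<in> c_arr C" using I by auto
      moreover have "c_cod D (c_id D (c_dom D f)) = c_dom D f" using c obj cat_id[OF D] by auto
      ultimately show ?thesis using comp f idc c cat_idr[OF D, of f] by auto
    qed
    subgoal for f g h using comp A cat_comp[OF D] cat_assoc[OF D, of f g h] by auto
    done
qed

lemma iso_arrE:
  assumes "iso_arr C f"
  obtains g where "f \<in> c_arr C" "g \<in> c_arr C" "c_dom C g = c_cod C f" "c_cod C g = c_dom C f"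
    "c_comp C g f = c_id C (c_dom C f)" "c_comp C f g = c_id C (c_cod C f)"
  using assms unfolding iso_arr_def by blast

lemma fullsub_equivalence:
  assumes D: "category D"
    and obj: "c_obj C \<subseteq> c_obj D"
    and arr: "c_arr C = {f\<in>c_arr D. c_dom D f \<in> c_obj C \<and> c_cod D f \<in> c_obj C}"
    and dom: "c_dom C = c_dom D" and cod: "c_cod C = c_cod D"
    and comp: "\<forall>f\<in>c_arr C. \<forall>g\<in>c_arr C. c_cod D f = c_dom D g \<longrightarrow> c_comp C g f = c_comp D g f"
    and idc: "\<forall>x\<in>c_obj C. c_id C x = c_id D x"
    and Fm: "\<forall>f\<in>c_arr C. Fm f = f"
    and ess: "\<forall>d\<in>c_obj D. \<exists>c\<in>c_obj C. \<exists>e. iso_arr D e \<and> c_dom D e = c \<and> c_cod D e = d"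
  shows "equivalence C D (\<lambda>x. x) Fm"
proof -
  have Ccat: "category C" by (rule fullsub_category[OF D obj arr dom cod comp idc])
  have A: "f \<in> c_arr C \<longleftrightarrow> f \<in> c_arr D \<and> c_dom D f \<in> c_obj C \<and> c_cod D f \<in> c_obj C" for f
    using arr by blast
  have "\<forall>d\<in>c_obj D. \<exists>ce. fst ce \<in> c_obj C \<and> iso_arr D (snd ce) \<and>
      c_dom D (snd ce) = fst ce \<and> c_cod D (snd ce) = d"
  proof
    fix d assume "d \<in> c_obj D"
    then obtain c e where "c \<in> c_obj C" "iso_arr D e" "c_dom D e = c" "c_cod D e = d"
      using ess by blast
    then show "\<exists>ce. fst ce \<in> c_obj C \<and> iso_arr D (snd ce) \<and>
      c_dom D (snd ce) = fst ce \<and> c_cod D (snd ce) = d"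
      by (intro exI[of _ "(c, e)"]) simp
  qed
  then have "\<exists>h. \<forall>d\<in>c_obj D. fst (h d) \<in> c_obj C \<and> iso_arr D (snd (h d)) \<and>
      c_dom D (snd (h d)) = fst (h d) \<and> c_cod D (snd (h d)) = d" by (rule bchoice)
  then obtain h where h: "\<forall>d\<in>c_obj D. fst (h d) \<in> c_obj C \<and> iso_arr D (snd (h d)) \<and>
      c_dom D (snd (h d)) = fst (h d) \<and> c_cod D (snd (h d)) = d" by (elim exE)
  define G where "G d = fst (h d)" for d
  define e where "e d = snd (h d)" for d
  have Ge: "\<And>d. d \<in> c_obj D \<Longrightarrow> G d \<in> c_obj C \<and> iso_arr D (e d) \<and>
      c_dom D (e d) = G d \<and> c_cod D (e d) = d"
    using h G_def e_def by auto
  have "\<forall>d\<in>c_obj D. \<exists>g. g \<in> c_arr D \<and> c_dom D g = d \<and> c_cod D g = G d \<and>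
      c_comp D g (e d) = c_id D (G d) \<and> c_comp D (e d) g = c_id D d"
  proof
    fix d assume d: "d \<in> c_obj D"
    then have i: "iso_arr D (e d)" and i2: "c_dom D (e d) = G d" "c_cod D (e d) = d" using Ge by auto
    obtain g where "g \<in> c_arr D" "c_dom D g = c_cod D (e d)" "c_cod D g = c_dom D (e d)"
      "c_comp D g (e d) = c_id D (c_dom D (e d))" "c_comp D (e d) g = c_id D (c_cod D (e d))"
      using iso_arrE[OF i] by metis
    then show "\<exists>g. g \<in> c_arr D \<and> c_dom D g = d \<and> c_cod D g = G d \<and>
      c_comp D g (e d) = c_id D (G d) \<and> c_comp D (e d) g = c_id D d"
      unfolding i2 by blast
  qed
  then have "\<exists>e'. \<forall>d\<in>c_obj D. e' d \<in> c_arr D \<and> c_dom D (e' d) = d \<and> c_cod D (e' d) = G d \<and>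
      c_comp D (e' d) (e d) = c_id D (G d) \<and> c_comp D (e d) (e' d) = c_id D d" by (rule bchoice)
  then obtain e' where e'0: "\<forall>d\<in>c_obj D. e' d \<in> c_arr D \<and> c_dom D (e' d) = d \<and> c_cod D (e' d) = G d \<and>
      c_comp D (e' d) (e d) = c_id D (G d) \<and> c_comp D (e d) (e' d) = c_id D d" by (elim exE)
  have e': "\<And>d. d \<in> c_obj D \<Longrightarrow> e' d \<in> c_arr D \<and> c_dom D (e' d) = d \<and> c_cod D (e' d) = G d \<and>
      c_comp D (e' d) (e d) = c_id D (G d) \<and> c_comp D (e d) (e' d) = c_id D d"
    using e'0 by blast
  have ea: "e d \<in> c_arr D" if "d \<in> c_obj D" for d using Ge[OF that] unfolding iso_arr_def by simp
  have GD: "G d \<in> c_obj D" if "d \<in> c_obj D" for d using Ge[OF that] obj by auto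
  define Gm where "Gm f = c_comp D (e' (c_cod D f)) (c_comp D f (e (c_dom D f)))" for f
  have Gm1: "c_comp D f (e (c_dom D f)) \<in> c_arr D \<and> c_dom D (c_comp D f (e (c_dom D f))) = G (c_dom D f)
     \<and> c_cod D (c_comp D f (e (c_dom D f))) = c_cod D f" if f: "f \<in> c_arr D" for f
    using cat_comp[OF D ea f] cat_dom_cod[OF D f] Ge by auto
  have Gm2: "Gm f \<in> c_arr D \<and> c_dom D (Gm f) = G (c_dom D f) \<and> c_cod D (Gm f) = G (c_cod D f)"
    if f: "f \<in> c_arr D" for f
    using Gm1[OF f] cat_comp[OF D _ e'[THEN conjunct1]] e' cat_dom_cod[OF D f] unfolding Gm_def by auto
  have GmC: "Gm f \<in> c_arr C" if f: "f \<in> c_arr D" for f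
    using Gm2[OF f] A Ge cat_dom_cod[OF D f] by auto
  have F1: "functor C D (\<lambda>x. x) Fm"
    unfolding functor_def
    using Ccat D obj A Fm idc comp cat_id[OF Ccat] cat_comp[OF Ccat] dom cod by auto
  have Gid: "Gm (c_id D d) = c_id D (G d)" if d: "d \<in> c_obj D" for d
  proof -
    have "Gm (c_id D d) = c_comp D (e' d) (c_comp D (c_id D d) (e d))"
      unfolding Gm_def using cat_id[OF D d] by simp
    also have "\<dots> = c_comp D (e' d) (e d)" using cat_idl[OF D ea[OF d]] Ge d by simp
    also have "\<dots> = c_id D (G d)" using e' d by simp
    finally show ?thesis .
  qed
  have Gcomp: "Gm (c_comp D g f) = c_comp D (Gm g) (Gm f)"
    if f: "f \<in> c_arr D" and g: "g \<in> c_arr D" and fg: "c_cod D f = c_dom D g" for f g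
  proof -
    define x y z where "x = c_dom D f" "y = c_cod D f" "z = c_cod D g"
    have xyz: "x \<in> c_obj D" "y \<in> c_obj D" "z \<in> c_obj D" "c_dom D g = y"
      using cat_dom_cod[OF D f] cat_dom_cod[OF D g] fg x_y_z_def by auto
    note ex = ea[OF xyz(1)] and ey = ea[OF xyz(2)] and e'y = e'[OF xyz(2)] and e'z = e'[OF xyz(3)]
      and Gex = Ge[OF xyz(1)] and Gey = Ge[OF xyz(2)]
    have fe: "c_comp D f (e x) \<in> c_arr D" "c_cod D (c_comp D f (e x)) = y" 
      "c_dom D (c_comp D f (e x)) = G x"
      using Gm1[OF f] x_y_z_def by auto
    have ge: "c_comp D g (e y) \<in> c_arr D" "c_cod D (c_comp D g (e y)) = z"
      using Gm1[OF g] x_y_z_def xyz by auto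
    have "c_comp D (Gm g) (Gm f) = c_comp D (c_comp D (e' z) (c_comp D g (e y)))
        (c_comp D (e' y) (c_comp D f (e x)))"
      unfolding Gm_def using x_y_z_def xyz by simp
    also have "\<dots> = c_comp D (e' z) (c_comp D (c_comp D g (e y)) (c_comp D (e' y) (c_comp D f (e x))))"
    proof -
      have a: "c_comp D (e' y) (c_comp D f (e x)) \<in> c_arr D" "c_cod D (c_comp D (e' y) (c_comp D f (e x))) = G y"
        using cat_comp[OF D fe(1) e'y[THEN conjunct1]] fe e'y by auto
      have b: "c_dom D (c_comp D g (e y)) = G y" using Gm1[OF g] xyz by auto
      show ?thesis using cat_assoc[OF D a(1) ge(1) e'z[THEN conjunct1]] a b ge e'z by auto
    qed
    also have "c_comp D (c_comp D g (e y)) (c_comp D (e' y) (c_comp D f (e x)))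
       = c_comp D (c_comp D (c_comp D g (e y)) (e' y)) (c_comp D f (e x))"
      using cat_assoc[OF D fe(1) e'y[THEN conjunct1] ge(1)] fe e'y ge Gm1[OF g] xyz by auto
    also have "c_comp D (c_comp D g (e y)) (e' y) = c_comp D g (c_comp D (e y) (e' y))"
      using cat_assoc[OF D e'y[THEN conjunct1] ey g] e'y Gey xyz by auto
    also have "\<dots> = g" using e'y cat_idr[OF D g] xyz by auto
    also have "c_comp D g (c_comp D f (e x)) = c_comp D (c_comp D g f) (e x)"
      using cat_assoc[OF D ex f g] Gex fg x_y_z_def by auto
    finally show ?thesis unfolding Gm_def x_y_z_def
      using cat_comp[OF D f g fg] by simp
  qed
  have F2: "functor D C G Gm"
    unfolding functor_def
  proof (intro conjI ballI impI)
    show "category D" "category C" by fact+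
    show "\<And>x. x \<in> c_obj D \<Longrightarrow> G x \<in> c_obj C" using Ge by auto
    show "\<And>f. f \<in> c_arr D \<Longrightarrow> Gm f \<in> c_arr C" by (rule GmC)
    show "\<And>f. f \<in> c_arr D \<Longrightarrow> c_dom C (Gm f) = G (c_dom D f)" using Gm2 dom by auto
    show "\<And>f. f \<in> c_arr D \<Longrightarrow> c_cod C (Gm f) = G (c_cod D f)" using Gm2 cod by auto
    show "\<And>x. x \<in> c_obj D \<Longrightarrow> Gm (c_id D x) = c_id C (G x)" using Gid idc Ge by auto
    show "\<And>f g. f \<in> c_arr D \<Longrightarrow> g \<in> c_arr D \<Longrightarrow> c_cod D f = c_dom D g \<Longrightarrow>
        Gm (c_comp D g f) = c_comp C (Gm g) (Gm f)"
      using Gcomp comp GmC Gm2 by auto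
  qed
  have N1: "nat_iso C C (\<lambda>x. x) (\<lambda>f. f) (G \<circ> (\<lambda>x. x)) (Gm \<circ> Fm) e'"
    unfolding nat_iso_def
  proof (intro conjI ballI)
    show "functor C C (\<lambda>x. x) (\<lambda>f. f)" by (rule functor_id[OF Ccat])
    show "functor C C (G \<circ> (\<lambda>x. x)) (Gm \<circ> Fm)" by (rule functor_compose[OF F1 F2])
    fix x assume x: "x \<in> c_obj C"
    then have xD: "x \<in> c_obj D" using obj by auto
    have e'C: "e' x \<in> c_arr C" using e'[OF xD] A Ge[OF xD] x by auto
    have eC: "e x \<in> c_arr C" using ea[OF xD] A Ge[OF xD] x by auto
    show "iso_arr C (e' x)" unfolding iso_arr_def
      using e'C eC e'[OF xD] Ge[OF xD] dom cod comp idc x by auto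
    show "c_dom C (e' x) = x" "c_cod C (e' x) = (G \<circ> (\<lambda>x. x)) x" using e'[OF xD] dom cod by auto
  next
    fix f assume f: "f \<in> c_arr C"
    then have fD: "f \<in> c_arr D" and xy: "c_dom D f \<in> c_obj C" "c_cod D f \<in> c_obj C" using A by auto
    define x y where "x = c_dom D f" "y = c_cod D f"
    have xyD: "x \<in> c_obj D" "y \<in> c_obj D" using xy obj x_y_def by auto
    have e'C: "e' x \<in> c_arr C" "e' y \<in> c_arr C" using e' xyD A Ge xy x_y_def by auto
    have L: "c_comp C ((Gm \<circ> Fm) f) (e' (c_dom C f)) = c_comp D (Gm f) (e' x)"
      using Fm f comp GmC[OF fD] e'C Gm2[OF fD] e' xyD dom cod x_y_def by auto
    have R: "c_comp C (e' (c_cod C f)) f = c_comp D (e' y) f"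
      using comp f e'C e' xyD dom cod x_y_def by auto
    have "c_comp D (Gm f) (e' x) = c_comp D (e' y) (c_comp D (c_comp D f (e x)) (e' x))"
      unfolding Gm_def x_y_def
      using cat_assoc[OF D e'[OF xyD(1), THEN conjunct1] Gm1[OF fD, THEN conjunct1] e'[OF xyD(2), THEN conjunct1]]
        Gm1[OF fD] e' xyD x_y_def by auto
    also have "c_comp D (c_comp D f (e x)) (e' x) = c_comp D f (c_comp D (e x) (e' x))"
      using cat_assoc[OF D e'[OF xyD(1), THEN conjunct1] ea[OF xyD(1)] fD] e' Ge xyD x_y_def by auto
    also have "\<dots> = f" using e' xyD cat_idr[OF D fD] x_y_def by auto
    finally show "c_comp C ((Gm \<circ> Fm) f) (e' (c_dom C f)) = c_comp C (e' (c_cod C f)) ((\<lambda>f. f) f)"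
      using L R by simp
  qed
  have N2: "nat_iso D D ((\<lambda>x. x) \<circ> G) (Fm \<circ> Gm) (\<lambda>x. x) (\<lambda>f. f) e"
    unfolding nat_iso_def
  proof (intro conjI ballI)
    show "functor D D ((\<lambda>x. x) \<circ> G) (Fm \<circ> Gm)" by (rule functor_compose[OF F2 F1])
    show "functor D D (\<lambda>x. x) (\<lambda>f. f)" by (rule functor_id[OF D])
    fix x assume x: "x \<in> c_obj D"
    show "iso_arr D (e x)" "c_dom D (e x) = ((\<lambda>x. x) \<circ> G) x" "c_cod D (e x) = x" using Ge[OF x] by auto
  next
    fix f assume f: "f \<in> c_arr D"
    define x y where "x = c_dom D f" "y = c_cod D f"
    have xyD: "x \<in> c_obj D" "y \<in> c_obj D" using cat_dom_cod[OF D f] x_y_def by auto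
    have "c_comp D (e y) ((Fm \<circ> Gm) f) = c_comp D (e y) (Gm f)" using Fm GmC[OF f] by simp
    also have "\<dots> = c_comp D (c_comp D (e y) (e' y)) (c_comp D f (e x))"
      unfolding Gm_def x_y_def
      using cat_assoc[OF D Gm1[OF f, THEN conjunct1] e'[OF xyD(2), THEN conjunct1] ea[OF xyD(2)]]
        Gm1[OF f] e' Ge xyD x_y_def by auto
    also have "\<dots> = c_comp D f (e x)"
      using e' xyD cat_idl[OF D Gm1[OF f, THEN conjunct1]] Gm1[OF f] x_y_def by auto
    finally show "c_comp D ((\<lambda>f. f) f) (e (c_dom D f)) = c_comp D (e (c_cod D f)) ((Fm \<circ> Gm) f)"
      using x_y_def by simp
  qed
  show ?thesis unfolding equivalence_def using F1 F2 N1 N2 by blast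
qed


section \<open>Quotient categories\<close>

locale qc =
  fixes I :: "('o, 'm) cat" and le :: "'m \<Rightarrow> 'm \<Rightarrow> bool"
  assumes cat: "category I"
    and par: "\<And>f g. f \<in> c_arr I \<Longrightarrow> g \<in> c_arr I \<Longrightarrow> le f g \<Longrightarrow> c_dom I f = c_dom I g \<and> c_cod I f = c_cod I g"
    and congL: "\<And>f f' g. f \<in> c_arr I \<Longrightarrow> f' \<in> c_arr I \<Longrightarrow> g \<in> c_arr I \<Longrightarrow> le f f' \<Longrightarrow>
        c_cod I f = c_dom I g \<Longrightarrow> le (c_comp I g f) (c_comp I g f')"
    and congR: "\<And>f g g'. f \<in> c_arr I \<Longrightarrow> g \<in> c_arr I \<Longrightarrow> g' \<in> c_arr I \<Longrightarrow> le g g' \<Longrightarrow>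
        c_cod I f = c_dom I g \<Longrightarrow> le (c_comp I g f) (c_comp I g' f)"
begin

abbreviation "B \<equiv> {(f, g). f \<in> c_arr I \<and> g \<in> c_arr I \<and> (le f g \<or> le g f)}"
abbreviation "R \<equiv> gen_equiv I le"
abbreviation "Q \<equiv> quot_cat I le"

lemma R_def': "R = B\<^sup>*" unfolding gen_equiv_def by simp

lemma R_par:
  assumes "(f, g) \<in> R" "f \<in> c_arr I"
  shows "g \<in> c_arr I \<and> c_dom I g = c_dom I f \<and> c_cod I g = c_cod I f"
  using assms(1) unfolding R_def'
proof (induction rule: rtrancl_induct)
  case base then show ?case using assms by simp
next
  case (step y z)
  then show ?case using par[of y z] par[of z y] by auto
qed

lemma R_nonarr:
  assumes "(f, g) \<in> R" "f \<notin> c_arr I"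
  shows "g = f"
  using assms(1) unfolding R_def'
proof (induction rule: rtrancl_induct)
  case base then show ?case by simp
next
  case (step y z)
  then show ?case using assms(2) by auto
qed

lemma R_sym: "(f, g) \<in> R \<Longrightarrow> (g, f) \<in> R"
proof -
  have "sym B" unfolding sym_def by blast
  then have "sym (B\<^sup>*)" by (rule sym_rtrancl)
  then show "(f, g) \<in> R \<Longrightarrow> (g, f) \<in> R" unfolding R_def' sym_def by blast
qed

lemma R_refl: "(f, f) \<in> R" unfolding R_def' by simp

lemma R_trans: "(f, g) \<in> R \<Longrightarrow> (g, h) \<in> R \<Longrightarrow> (f, h) \<in> R"
  unfolding R_def' by (rule rtrancl_trans)

lemma qcls_eq_iff: "qcls I le f = qcls I le g \<longleftrightarrow> (f, g) \<in> R"
proof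
  assume "qcls I le f = qcls I le g"
  moreover have "g \<in> qcls I le g" unfolding qcls_def using R_refl by simp
  ultimately show "(f, g) \<in> R" unfolding qcls_def by blast
next
  assume fg: "(f, g) \<in> R"
  show "qcls I le f = qcls I le g"
    unfolding qcls_def using fg R_sym R_trans by blast
qed

lemma qcls_mem: "h \<in> qcls I le f \<longleftrightarrow> (f, h) \<in> R"
  unfolding qcls_def by simp

lemma some_qcls: "((SOME h. h \<in> qcls I le f), f) \<in> R"
proof -
  have "f \<in> qcls I le f" using qcls_mem R_refl by simp
  then have "(SOME h. h \<in> qcls I le f) \<in> qcls I le f" by (rule someI)
  then show ?thesis using qcls_mem R_sym by blast
qed

lemma R_congL:
  assumes "(f, f') \<in> R" "f \<in> c_arr I" "g \<in> c_arr I" "c_cod I f = c_dom I g"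
  shows "(c_comp I g f, c_comp I g f') \<in> R"
  using assms(1) unfolding R_def'
proof (induction rule: rtrancl_induct)
  case base then show ?case by simp
next
  case (step y z)
  have y: "y \<in> c_arr I" "c_cod I y = c_dom I g" using R_par[of f y] step assms unfolding R_def' by auto
  have z: "z \<in> c_arr I" "c_cod I z = c_dom I g" using step y par[of y z] par[of z y] by auto
  have "(c_comp I g y, c_comp I g z) \<in> B"
    using step y z congL[of y z g] congL[of z y g] cat_comp[OF cat] assms by auto
  then show ?case using step by (meson rtrancl.rtrancl_into_rtrancl)
qed

lemma R_congR:
  assumes "(g, g') \<in> R" "f \<in> c_arr I" "g \<in> c_arr I" "c_cod I f = c_dom I g"
  shows "(c_comp I g f, c_comp I g' f) \<in> R"
  using assms(1) unfolding R_def'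
proof (induction rule: rtrancl_induct)
  case base then show ?case by simp
next
  case (step y z)
  have y: "y \<in> c_arr I" "c_cod I f = c_dom I y" using R_par[of g y] step assms unfolding R_def' by auto
  have z: "z \<in> c_arr I" "c_cod I f = c_dom I z" using step y par[of y z] par[of z y] by auto
  have "(c_comp I y f, c_comp I z f) \<in> B"
    using step y z congR[of f y z] congR[of f z y] cat_comp[OF cat] assms by auto
  then show ?case using step by (meson rtrancl.rtrancl_into_rtrancl)
qed

lemma R_cong:
  assumes "(f, f') \<in> R" "(g, g') \<in> R" "f \<in> c_arr I" "g \<in> c_arr I" "c_cod I f = c_dom I g"
  shows "(c_comp I g f, c_comp I g' f') \<in> R"
proof -
  have "(c_comp I g f, c_comp I g f') \<in> R" by (rule R_congL[OF assms(1,3,4,5)])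
  moreover have "f' \<in> c_arr I" "c_cod I f' = c_dom I g" using R_par[OF assms(1,3)] assms by auto
  then have "(c_comp I g f', c_comp I g' f') \<in> R" using R_congR[OF assms(2)] assms by auto
  ultimately show ?thesis by (rule R_trans)
qed

lemma Q_simps:
  "c_obj Q = c_obj I" "c_arr Q = qcls I le ` c_arr I"
  "c_dom Q E = c_dom I (SOME f. f \<in> E)" "c_cod Q E = c_cod I (SOME f. f \<in> E)"
  "c_comp Q E F = qcls I le (c_comp I (SOME f. f \<in> E) (SOME f. f \<in> F))"
  "c_id Q x = qcls I le (c_id I x)"
  unfolding quot_cat_def by simp_all

lemma Q_dom: "f \<in> c_arr I \<Longrightarrow> c_dom Q (qcls I le f) = c_dom I f"
  using Q_simps(3) some_qcls R_par R_sym by metis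

lemma Q_cod: "f \<in> c_arr I \<Longrightarrow> c_cod Q (qcls I le f) = c_cod I f"
  using Q_simps(4) some_qcls R_par R_sym by metis

lemma Q_comp:
  assumes "f \<in> c_arr I" "g \<in> c_arr I" "c_cod I f = c_dom I g"
  shows "c_comp Q (qcls I le g) (qcls I le f) = qcls I le (c_comp I g f)"
proof -
  have "(c_comp I (SOME h. h \<in> qcls I le g) (SOME h. h \<in> qcls I le f), c_comp I g f) \<in> R"
  proof (rule R_cong)
    show "((SOME h. h \<in> qcls I le f), f) \<in> R" "((SOME h. h \<in> qcls I le g), g) \<in> R" by (rule some_qcls)+
    show "(SOME h. h \<in> qcls I le f) \<in> c_arr I" "(SOME h. h \<in> qcls I le g) \<in> c_arr I"
      "c_cod I (SOME h. h \<in> qcls I le f) = c_dom I (SOME h. h \<in> qcls I le g)"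
      using R_par[OF R_sym[OF some_qcls[of f]] assms(1)] R_par[OF R_sym[OF some_qcls[of g]] assms(2)]
        assms(3) by auto
  qed
  then show ?thesis unfolding Q_simps qcls_eq_iff .
qed

lemma Q_arr_iff: "E \<in> c_arr Q \<longleftrightarrow> (\<exists>f\<in>c_arr I. E = qcls I le f)"
  unfolding Q_simps by blast

lemma Q_category: "category Q"
  unfolding category_def
proof (intro conjI ballI impI)
  fix E assume "E \<in> c_arr Q"
  then obtain f where f: "f \<in> c_arr I" "E = qcls I le f" using Q_arr_iff by blast
  show "c_dom Q E \<in> c_obj Q" "c_cod Q E \<in> c_obj Q"
    using f Q_dom Q_cod cat_dom_cod[OF cat f(1)] Q_simps(1) by auto
  show "c_comp Q (c_id Q (c_cod Q E)) E = E"
    using f Q_cod Q_simps(6) Q_comp cat_id[OF cat] cat_dom_cod[OF cat] cat_idl[OF cat] by auto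
  show "c_comp Q E (c_id Q (c_dom Q E)) = E"
    using f Q_dom Q_simps(6) Q_comp cat_id[OF cat] cat_dom_cod[OF cat] cat_idr[OF cat] by auto
next
  fix x assume "x \<in> c_obj Q"
  then have x: "x \<in> c_obj I" using Q_simps by simp
  show "c_id Q x \<in> c_arr Q" "c_dom Q (c_id Q x) = x" "c_cod Q (c_id Q x) = x"
    using x cat_id[OF cat x] Q_simps Q_dom Q_cod by auto
next
  fix E F assume "E \<in> c_arr Q" "F \<in> c_arr Q" and EF: "c_cod Q E = c_dom Q F"
  then obtain f g where f: "f \<in> c_arr I" "E = qcls I le f" and g: "g \<in> c_arr I" "F = qcls I le g"
    using Q_arr_iff by metis
  have fg: "c_cod I f = c_dom I g" using EF f g Q_dom Q_cod by simp
  show "c_comp Q F E \<in> c_arr Q" "c_dom Q (c_comp Q F E) = c_dom Q E" "c_cod Q (c_comp Q F E) = c_cod Q F"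
    using Q_comp[OF f(1) g(1) fg] cat_comp[OF cat f(1) g(1) fg] f g Q_dom Q_cod Q_simps(2) by auto
next
  fix E F G assume "E \<in> c_arr Q" "F \<in> c_arr Q" "G \<in> c_arr Q"
    and EF: "c_cod Q E = c_dom Q F" and FG: "c_cod Q F = c_dom Q G"
  then obtain f g h where f: "f \<in> c_arr I" "E = qcls I le f" and g: "g \<in> c_arr I" "F = qcls I le g"
    and h: "h \<in> c_arr I" "G = qcls I le h"
    using Q_arr_iff by metis
  have fg: "c_cod I f = c_dom I g" using EF f g Q_dom Q_cod by simp
  have gh: "c_cod I g = c_dom I h" using FG g h Q_dom Q_cod by simp
  show "c_comp Q G (c_comp Q F E) = c_comp Q (c_comp Q G F) E"
    using Q_comp[OF f(1) g(1) fg] Q_comp[OF g(1) h(1) gh] cat_comp[OF cat f(1) g(1) fg]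
      cat_comp[OF cat g(1) h(1) gh] Q_comp cat_assoc[OF cat f(1) g(1) h(1) fg gh] f g h fg gh by simp
qed

lemma Q_iso:
  assumes r: "r \<in> c_arr I" and s: "s \<in> c_arr I" and rs: "c_cod I r = c_dom I s" "c_cod I s = c_dom I r"
    and sr_id: "(c_comp I s r, c_id I (c_dom I r)) \<in> R"
    and rs_id: "(c_comp I r s, c_id I (c_dom I s)) \<in> R"
  shows "iso_arr Q (qcls I le r)"
  unfolding iso_arr_def
proof (intro conjI bexI)
  show "qcls I le r \<in> c_arr Q" "qcls I le s \<in> c_arr Q" using r s Q_simps by auto
  show "c_dom Q (qcls I le s) = c_cod Q (qcls I le r)" "c_cod Q (qcls I le s) = c_dom Q (qcls I le r)"
    using Q_dom Q_cod r s rs by auto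
  show "c_comp Q (qcls I le s) (qcls I le r) = c_id Q (c_dom Q (qcls I le r))"
    using Q_comp[OF r s rs(1)] sr_id Q_dom[OF r] Q_simps(6) qcls_eq_iff by simp
  show "c_comp Q (qcls I le r) (qcls I le s) = c_id Q (c_cod Q (qcls I le r))"
    using Q_comp[OF s r rs(2)] rs_id Q_cod[OF r] Q_simps(6) qcls_eq_iff rs by simp
qed

end

section \<open>The nerve category\<close>

lemma mor_split:
  obtains m Xo Xm n Yo Ym \<alpha> \<theta> where "f = ((m, Xo, Xm), (n, Yo, Ym), \<alpha>, \<theta>)"
  by (metis prod.exhaust)

lemma nerve_comp_simp:
  "nerve_comp C (B', D, \<beta>, \<phi>) (A, B, \<alpha>, \<theta>) =
     (A, D, (\<lambda>i. if i \<le> fst A then \<beta> (\<alpha> i) else undefined),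
            (\<lambda>i. if i \<le> fst A then c_comp C (\<phi> (\<alpha> i)) (\<theta> i) else undefined))"
  unfolding nerve_comp_def by simp

lemma nerve_id_simp:
  "nerve_id C (n, Xo, Xm) = ((n, Xo, Xm), (n, Xo, Xm), (\<lambda>i. if i \<le> n then i else undefined),
     (\<lambda>i. if i \<le> n then c_id C (Xo i) else undefined))"
  unfolding nerve_id_def by simp

locale nv =
  fixes C :: "('o, 'm) cat" and Cm Cp :: "'m set"
  assumes cat: "category C" and wm: "wide_subcat C Cm" and wp: "wide_subcat C Cp"
begin

lemma Cm_arr: "f \<in> Cm \<Longrightarrow> f \<in> c_arr C" using wm unfolding wide_subcat_def by blast
lemma Cp_arr: "f \<in> Cp \<Longrightarrow> f \<in> c_arr C" using wp unfolding wide_subcat_def by blast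
lemma Cp_id: "x \<in> c_obj C \<Longrightarrow> c_id C x \<in> Cp" using wp unfolding wide_subcat_def by blast
lemma Cp_comp: "f \<in> Cp \<Longrightarrow> g \<in> Cp \<Longrightarrow> c_cod C f = c_dom C g \<Longrightarrow> c_comp C g f \<in> Cp"
  using wp unfolding wide_subcat_def by blast

lemma objD:
  assumes "nerve_obj C Cm (n, Xo, Xm)"
  shows "\<And>i. i \<le> n \<Longrightarrow> Xo i \<in> c_obj C"
    "\<And>i. n < i \<Longrightarrow> Xo i = undefined"
    "\<And>i j. i \<le> j \<Longrightarrow> j \<le> n \<Longrightarrow> Xm i j \<in> Cm"
    "\<And>i j. i \<le> j \<Longrightarrow> j \<le> n \<Longrightarrow> c_dom C (Xm i j) = Xo i"
    "\<And>i j. i \<le> j \<Longrightarrow> j \<le> n \<Longrightarrow> c_cod C (Xm i j) = Xo j"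
    "\<And>i j. \<not> (i \<le> j \<and> j \<le> n) \<Longrightarrow> Xm i j = undefined"
    "\<And>i. i \<le> n \<Longrightarrow> Xm i i = c_id C (Xo i)"
    "\<And>i j k. i \<le> j \<Longrightarrow> j \<le> k \<Longrightarrow> k \<le> n \<Longrightarrow> c_comp C (Xm j k) (Xm i j) = Xm i k"
  using assms unfolding nerve_obj_def by auto

lemma morD:
  assumes "nerve_mor C Cm Cp ((m, Xo, Xm), (n, Yo, Ym), \<alpha>, \<theta>)"
  shows "nerve_obj C Cm (m, Xo, Xm)" "nerve_obj C Cm (n, Yo, Ym)"
    "\<And>i. i \<le> m \<Longrightarrow> \<alpha> i \<le> n"
    "\<And>i j. i \<le> j \<Longrightarrow> j \<le> m \<Longrightarrow> \<alpha> i \<le> \<alpha> j"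
    "\<And>i. m < i \<Longrightarrow> \<alpha> i = undefined"
    "\<And>i. m < i \<Longrightarrow> \<theta> i = undefined"
    "\<And>i. i \<le> m \<Longrightarrow> \<theta> i \<in> Cp"
    "\<And>i. i \<le> m \<Longrightarrow> c_dom C (\<theta> i) = Xo i"
    "\<And>i. i \<le> m \<Longrightarrow> c_cod C (\<theta> i) = Yo (\<alpha> i)"
    "\<And>i j. i \<le> j \<Longrightarrow> j \<le> m \<Longrightarrow> c_comp C (Ym (\<alpha> i) (\<alpha> j)) (\<theta> i) = c_comp C (\<theta> j) (Xm i j)"
  using assms unfolding nerve_mor_def by auto

lemma morI:
  assumes "nerve_obj C Cm (m, Xo, Xm)" "nerve_obj C Cm (n, Yo, Ym)"
    "\<And>i. i \<le> m \<Longrightarrow> \<alpha> i \<le> n"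
    "\<And>i j. i \<le> j \<Longrightarrow> j \<le> m \<Longrightarrow> \<alpha> i \<le> \<alpha> j"
    "\<And>i. m < i \<Longrightarrow> \<alpha> i = undefined"
    "\<And>i. m < i \<Longrightarrow> \<theta> i = undefined"
    "\<And>i. i \<le> m \<Longrightarrow> \<theta> i \<in> Cp"
    "\<And>i. i \<le> m \<Longrightarrow> c_dom C (\<theta> i) = Xo i"
    "\<And>i. i \<le> m \<Longrightarrow> c_cod C (\<theta> i) = Yo (\<alpha> i)"
    "\<And>i j. i \<le> j \<Longrightarrow> j \<le> m \<Longrightarrow> c_comp C (Ym (\<alpha> i) (\<alpha> j)) (\<theta> i) = c_comp C (\<theta> j) (Xm i j)"
  shows "nerve_mor C Cm Cp ((m, Xo, Xm), (n, Yo, Ym), \<alpha>, \<theta>)"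
  using assms unfolding nerve_mor_def by auto

lemma comp_mor:
  assumes f: "nerve_mor C Cm Cp ((m, Xo, Xm), (n, Yo, Ym), \<alpha>, \<theta>)"
    and g: "nerve_mor C Cm Cp ((n, Yo, Ym), (p, Zo, Zm), \<beta>, \<phi>)"
  shows "nerve_mor C Cm Cp ((m, Xo, Xm), (p, Zo, Zm), (\<lambda>i. if i \<le> m then \<beta> (\<alpha> i) else undefined),
            (\<lambda>i. if i \<le> m then c_comp C (\<phi> (\<alpha> i)) (\<theta> i) else undefined))"
proof (rule morI)
  note F = morD[OF f] and G = morD[OF g]
  note X = objD[OF F(1)] and Y = objD[OF F(2)] and Z = objD[OF G(2)]
  show "nerve_obj C Cm (m, Xo, Xm)" "nerve_obj C Cm (p, Zo, Zm)" by fact+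
  show "\<And>i. i \<le> m \<Longrightarrow> (if i \<le> m then \<beta> (\<alpha> i) else undefined) \<le> p" using F G by simp
  show "\<And>i j. i \<le> j \<Longrightarrow> j \<le> m \<Longrightarrow> (if i \<le> m then \<beta> (\<alpha> i) else undefined) \<le> (if j \<le> m then \<beta> (\<alpha> j) else undefined)"
    using F G by simp
  show "\<And>i. m < i \<Longrightarrow> (if i \<le> m then \<beta> (\<alpha> i) else undefined) = undefined" by simp
  show "\<And>i. m < i \<Longrightarrow> (if i \<le> m then c_comp C (\<phi> (\<alpha> i)) (\<theta> i) else undefined) = undefined" by simp
  show "\<And>i. i \<le> m \<Longrightarrow> (if i \<le> m then c_comp C (\<phi> (\<alpha> i)) (\<theta> i) else undefined) \<in> Cp"
    using F G Cp_comp by simp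
  show "\<And>i. i \<le> m \<Longrightarrow> c_dom C (if i \<le> m then c_comp C (\<phi> (\<alpha> i)) (\<theta> i) else undefined) = Xo i"
    using F G cat_comp[OF cat] Cp_arr by simp
  show "\<And>i. i \<le> m \<Longrightarrow> c_cod C (if i \<le> m then c_comp C (\<phi> (\<alpha> i)) (\<theta> i) else undefined) =
      Zo (if i \<le> m then \<beta> (\<alpha> i) else undefined)"
    using F G cat_comp[OF cat] Cp_arr by simp
  fix i j assume ij: "i \<le> j" "j \<le> m"
  have im: "i \<le> m" using ij by simp
  have a: "\<alpha> i \<le> \<alpha> j" "\<alpha> j \<le> n" using F ij by auto
  have b: "\<beta> (\<alpha> i) \<le> \<beta> (\<alpha> j)" "\<beta> (\<alpha> j) \<le> p" using G a by auto
  have th: "\<theta> i \<in> c_arr C" "\<theta> j \<in> c_arr C" using F(7) Cp_arr ij im by auto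
  have ph: "\<phi> (\<alpha> i) \<in> c_arr C" "\<phi> (\<alpha> j) \<in> c_arr C" using G(7) Cp_arr a by auto
  have xm: "Xm i j \<in> c_arr C" using X(3) Cm_arr ij by auto
  have ym: "Ym (\<alpha> i) (\<alpha> j) \<in> c_arr C" using Y(3) Cm_arr a by auto
  have zm: "Zm (\<beta> (\<alpha> i)) (\<beta> (\<alpha> j)) \<in> c_arr C" using Z(3) Cm_arr b by auto
  have "c_comp C (Zm (\<beta> (\<alpha> i)) (\<beta> (\<alpha> j))) (c_comp C (\<phi> (\<alpha> i)) (\<theta> i))
      = c_comp C (c_comp C (Zm (\<beta> (\<alpha> i)) (\<beta> (\<alpha> j))) (\<phi> (\<alpha> i))) (\<theta> i)"
    using cat_assoc[OF cat th(1) ph(1) zm] F G Z a b im by auto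
  also have "c_comp C (Zm (\<beta> (\<alpha> i)) (\<beta> (\<alpha> j))) (\<phi> (\<alpha> i)) = c_comp C (\<phi> (\<alpha> j)) (Ym (\<alpha> i) (\<alpha> j))"
    using G(10) a by auto
  also have "c_comp C (c_comp C (\<phi> (\<alpha> j)) (Ym (\<alpha> i) (\<alpha> j))) (\<theta> i)
      = c_comp C (\<phi> (\<alpha> j)) (c_comp C (Ym (\<alpha> i) (\<alpha> j)) (\<theta> i))"
    using cat_assoc[OF cat th(1) ym ph(2)] F G Y a im by auto
  also have "c_comp C (Ym (\<alpha> i) (\<alpha> j)) (\<theta> i) = c_comp C (\<theta> j) (Xm i j)"
    using F(10) ij by auto
  also have "c_comp C (\<phi> (\<alpha> j)) (c_comp C (\<theta> j) (Xm i j)) = c_comp C (c_comp C (\<phi> (\<alpha> j)) (\<theta> j)) (Xm i j)"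
    using cat_assoc[OF cat xm th(2) ph(2)] F G X a ij by auto
  finally show "c_comp C (Zm (if i \<le> m then \<beta> (\<alpha> i) else undefined) (if j \<le> m then \<beta> (\<alpha> j) else undefined))
          (if i \<le> m then c_comp C (\<phi> (\<alpha> i)) (\<theta> i) else undefined) =
         c_comp C (if j \<le> m then c_comp C (\<phi> (\<alpha> j)) (\<theta> j) else undefined) (Xm i j)"
    using ij im by simp
qed

lemma id_mor:
  assumes A: "nerve_obj C Cm (n, Xo, Xm)"
  shows "nerve_mor C Cm Cp (nerve_id C (n, Xo, Xm))"
  unfolding nerve_id_simp
proof (rule morI)
  note X = objD[OF A]
  show "nerve_obj C Cm (n, Xo, Xm)" by fact+
  fix i j assume ij: "i \<le> j" "j \<le> n"
  have xm: "Xm i j \<in> c_arr C" using X(3) Cm_arr ij by auto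
  show "c_comp C (Xm (if i \<le> n then i else undefined) (if j \<le> n then j else undefined)) (if i \<le> n then c_id C (Xo i) else undefined) =
         c_comp C (if j \<le> n then c_id C (Xo j) else undefined) (Xm i j)"
    using ij cat_idl[OF cat xm] cat_idr[OF cat xm] X by simp
qed (insert A objD[OF A] Cp_id cat_id[OF cat], auto)

abbreviation "N \<equiv> int_N C Cm Cp"

lemma N_simps: "c_obj N = {A. nerve_obj C Cm A}" "c_arr N = {f. nerve_mor C Cm Cp f}"
  "c_dom N = fst" "c_cod N = (\<lambda>f. fst (snd f))" "c_comp N = nerve_comp C" "c_id N = nerve_id C"
  unfolding int_N_def by (simp_all add: fun_eq_iff)

lemma N_category: "category N"
  unfolding category_def N_simps
proof (intro conjI ballI impI)
  fix f assume "f \<in> {f. nerve_mor C Cm Cp f}"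
  then have f: "nerve_mor C Cm Cp f" by simp
  obtain m Xo Xm n Yo Ym \<alpha> \<theta> where fe: "f = ((m, Xo, Xm), (n, Yo, Ym), \<alpha>, \<theta>)" by (rule mor_split)
  note F = morD[OF f[unfolded fe]]
  note X = objD[OF F(1)] and Y = objD[OF F(2)]
  show "fst f \<in> {A. nerve_obj C Cm A}" "fst (snd f) \<in> {A. nerve_obj C Cm A}" using F fe by auto
  have th: "\<And>i. i \<le> m \<Longrightarrow> \<theta> i \<in> c_arr C" using F(7) Cp_arr by auto
  show "nerve_comp C (nerve_id C (fst (snd f))) f = f"
    unfolding fe by (simp add: nerve_id_simp nerve_comp_simp fun_eq_iff F cat_idl[OF cat] th)
  show "nerve_comp C f (nerve_id C (fst f)) = f"
    unfolding fe by (simp add: nerve_id_simp nerve_comp_simp fun_eq_iff F cat_idr[OF cat] th)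
next
  fix A assume "A \<in> {A. nerve_obj C Cm A}"
  then have A: "nerve_obj C Cm A" by simp
  obtain n Xo Xm where Ae: "A = (n, Xo, Xm)" by (rule prod_cases3)
  show "nerve_id C A \<in> {f. nerve_mor C Cm Cp f}" using id_mor A Ae by simp
  show "fst (nerve_id C A) = A" "fst (snd (nerve_id C A)) = A" unfolding Ae nerve_id_simp by simp_all
next
  fix f g assume "f \<in> {f. nerve_mor C Cm Cp f}" "g \<in> {f. nerve_mor C Cm Cp f}" and fg: "fst (snd f) = fst g"
  then have f: "nerve_mor C Cm Cp f" and g: "nerve_mor C Cm Cp g" by simp_all
  obtain m Xo Xm n Yo Ym \<alpha> \<theta> where fe: "f = ((m, Xo, Xm), (n, Yo, Ym), \<alpha>, \<theta>)" by (rule mor_split)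
  obtain n' Yo' Ym' p Zo Zm \<beta> \<phi> where ge: "g = ((n', Yo', Ym'), (p, Zo, Zm), \<beta>, \<phi>)" by (rule mor_split)
  have gg: "g = ((n, Yo, Ym), (p, Zo, Zm), \<beta>, \<phi>)" using fg fe ge by simp
  show "nerve_comp C g f \<in> {f. nerve_mor C Cm Cp f}"
    using comp_mor[OF f[unfolded fe] g[unfolded gg]] unfolding fe gg nerve_comp_simp by simp
  show "fst (nerve_comp C g f) = fst f" "fst (snd (nerve_comp C g f)) = fst (snd g)"
    unfolding fe gg nerve_comp_simp by simp_all
next
  fix f g h assume "f \<in> {f. nerve_mor C Cm Cp f}" "g \<in> {f. nerve_mor C Cm Cp f}" "h \<in> {f. nerve_mor C Cm Cp f}"
    and fg: "fst (snd f) = fst g" and gh: "fst (snd g) = fst h"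
  then have f: "nerve_mor C Cm Cp f" and g: "nerve_mor C Cm Cp g" and h: "nerve_mor C Cm Cp h" by simp_all
  obtain m Xo Xm n Yo Ym \<alpha> \<theta> where fe: "f = ((m, Xo, Xm), (n, Yo, Ym), \<alpha>, \<theta>)" by (rule mor_split)
  obtain n' Yo' Ym' p Zo Zm \<beta> \<phi> where ge: "g = ((n', Yo', Ym'), (p, Zo, Zm), \<beta>, \<phi>)" by (rule mor_split)
  obtain p' Zo' Zm' q Wo Wm \<gamma> \<psi> where he: "h = ((p', Zo', Zm'), (q, Wo, Wm), \<gamma>, \<psi>)" by (rule mor_split)
  have gg: "g = ((n, Yo, Ym), (p, Zo, Zm), \<beta>, \<phi>)" using fg fe ge by simp
  have hh: "h = ((p, Zo, Zm), (q, Wo, Wm), \<gamma>, \<psi>)" using gh gg he by simp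
  note F = morD[OF f[unfolded fe]] and G = morD[OF g[unfolded gg]] and H = morD[OF h[unfolded hh]]
  have "c_comp C (\<psi> (\<beta> (\<alpha> i))) (c_comp C (\<phi> (\<alpha> i)) (\<theta> i)) = c_comp C (c_comp C (\<psi> (\<beta> (\<alpha> i))) (\<phi> (\<alpha> i))) (\<theta> i)"
    if i: "i \<le> m" for i
  proof -
    have a: "\<alpha> i \<le> n" "\<beta> (\<alpha> i) \<le> p" using F(3) G(3) i by auto
    show ?thesis using cat_assoc[OF cat Cp_arr[OF F(7)[OF i]] Cp_arr[OF G(7)[OF a(1)]] Cp_arr[OF H(7)[OF a(2)]]]
      F G H a i by simp
  qed
  then show "nerve_comp C h (nerve_comp C g f) = nerve_comp C (nerve_comp C h g) f"
    unfolding fe gg hh nerve_comp_simp using F(3) by (simp add: fun_eq_iff)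
qed

end

context nv
begin

lemma le_simp:
  "nerve_le C (A, B, \<alpha>, \<theta>) (A', B', \<alpha>', \<theta>') \<longleftrightarrow> A = A' \<and> B = B' \<and>
     (\<forall>i\<le>fst A. \<alpha> i \<le> \<alpha>' i \<and> \<theta>' i = c_comp C (snd (snd B) (\<alpha> i) (\<alpha>' i)) (\<theta> i))"
  unfolding nerve_le_def by simp

lemma le_par: "nerve_le C f g \<Longrightarrow> fst f = fst g \<and> fst (snd f) = fst (snd g)"
  by (cases f rule: prod_cases4; cases g rule: prod_cases4) (simp add: le_simp)

lemma le_congL:
  assumes f: "f \<in> c_arr N" and f': "f' \<in> c_arr N" and g: "g \<in> c_arr N" and le: "nerve_le C f f'"
    and fg: "c_cod N f = c_dom N g"
  shows "nerve_le C (c_comp N g f) (c_comp N g f')"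
proof -
  obtain m Xo Xm n Yo Ym \<alpha> \<theta> where fe: "f = ((m, Xo, Xm), (n, Yo, Ym), \<alpha>, \<theta>)" by (rule mor_split)
  obtain A B \<alpha>' \<theta>' where f'e0: "f' = (A, B, \<alpha>', \<theta>')" by (rule prod_cases4)
  have f'e: "f' = ((m, Xo, Xm), (n, Yo, Ym), \<alpha>', \<theta>')" using le_par[OF le] fe f'e0 by simp
  obtain n' Yo' Ym' p Zo Zm \<beta> \<phi> where ge: "g = ((n', Yo', Ym'), (p, Zo, Zm), \<beta>, \<phi>)" by (rule mor_split)
  have gg: "g = ((n, Yo, Ym), (p, Zo, Zm), \<beta>, \<phi>)" using fg fe ge N_simps by simp
  note F = morD[OF f[unfolded N_simps fe, simplified]] and F' = morD[OF f'[unfolded N_simps f'e, simplified]]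
    and G = morD[OF g[unfolded N_simps gg, simplified]]
  note Y = objD[OF F(2)] and Z = objD[OF G(2)]
  have L: "\<forall>i\<le>m. \<alpha> i \<le> \<alpha>' i \<and> \<theta>' i = c_comp C (Ym (\<alpha> i) (\<alpha>' i)) (\<theta> i)"
    using le unfolding fe f'e le_simp by simp
  have "\<beta> (\<alpha> i) \<le> \<beta> (\<alpha>' i) \<and>
     c_comp C (\<phi> (\<alpha>' i)) (\<theta>' i) = c_comp C (Zm (\<beta> (\<alpha> i)) (\<beta> (\<alpha>' i))) (c_comp C (\<phi> (\<alpha> i)) (\<theta> i))"
    if i: "i \<le> m" for i
  proof -
    have a: "\<alpha> i \<le> \<alpha>' i" "\<alpha>' i \<le> n" "\<alpha> i \<le> n" using L F'(3) F(3) i by auto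
    have b: "\<beta> (\<alpha> i) \<le> \<beta> (\<alpha>' i)" "\<beta> (\<alpha>' i) \<le> p" using G(4) G(3) a by auto
    have th: "\<theta> i \<in> c_arr C" using F(7) Cp_arr i by auto
    have ph: "\<phi> (\<alpha> i) \<in> c_arr C" "\<phi> (\<alpha>' i) \<in> c_arr C" using G(7) Cp_arr a by auto
    have ym: "Ym (\<alpha> i) (\<alpha>' i) \<in> c_arr C" using Y(3) Cm_arr a by auto
    have zm: "Zm (\<beta> (\<alpha> i)) (\<beta> (\<alpha>' i)) \<in> c_arr C" using Z(3) Cm_arr b by auto
    have "c_comp C (\<phi> (\<alpha>' i)) (\<theta>' i) = c_comp C (\<phi> (\<alpha>' i)) (c_comp C (Ym (\<alpha> i) (\<alpha>' i)) (\<theta> i))"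
      using L i by simp
    also have "\<dots> = c_comp C (c_comp C (\<phi> (\<alpha>' i)) (Ym (\<alpha> i) (\<alpha>' i))) (\<theta> i)"
      using cat_assoc[OF cat th ym ph(2)] F G Y a i by auto
    also have "c_comp C (\<phi> (\<alpha>' i)) (Ym (\<alpha> i) (\<alpha>' i)) = c_comp C (Zm (\<beta> (\<alpha> i)) (\<beta> (\<alpha>' i))) (\<phi> (\<alpha> i))"
      using G(10) a by auto
    also have "c_comp C (c_comp C (Zm (\<beta> (\<alpha> i)) (\<beta> (\<alpha>' i))) (\<phi> (\<alpha> i))) (\<theta> i)
        = c_comp C (Zm (\<beta> (\<alpha> i)) (\<beta> (\<alpha>' i))) (c_comp C (\<phi> (\<alpha> i)) (\<theta> i))"
      using cat_assoc[OF cat th ph(1) zm] F G Z a b i by auto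
    finally show ?thesis using b by simp
  qed
  then show ?thesis unfolding fe f'e gg N_simps nerve_comp_simp le_simp by simp
qed

lemma le_congR:
  assumes f: "f \<in> c_arr N" and g: "g \<in> c_arr N" and g': "g' \<in> c_arr N" and le: "nerve_le C g g'"
    and fg: "c_cod N f = c_dom N g"
  shows "nerve_le C (c_comp N g f) (c_comp N g' f)"
proof -
  obtain l Wo Wm m Xo Xm \<gamma> \<psi> where fe: "f = ((l, Wo, Wm), (m, Xo, Xm), \<gamma>, \<psi>)" by (rule mor_split)
  obtain m' Xo' Xm' n Yo Ym \<alpha> \<theta> where ge: "g = ((m', Xo', Xm'), (n, Yo, Ym), \<alpha>, \<theta>)" by (rule mor_split)
  have gg: "g = ((m, Xo, Xm), (n, Yo, Ym), \<alpha>, \<theta>)" using fg fe ge N_simps by simp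
  obtain A B \<alpha>' \<theta>' where g'e0: "g' = (A, B, \<alpha>', \<theta>')" by (rule prod_cases4)
  have g'e: "g' = ((m, Xo, Xm), (n, Yo, Ym), \<alpha>', \<theta>')" using le_par[OF le] gg g'e0 by simp
  note F = morD[OF f[unfolded N_simps fe, simplified]] and G' = morD[OF g'[unfolded N_simps g'e, simplified]]
    and G = morD[OF g[unfolded N_simps gg, simplified]]
  note Y = objD[OF G(2)]
  have L: "\<forall>i\<le>m. \<alpha> i \<le> \<alpha>' i \<and> \<theta>' i = c_comp C (Ym (\<alpha> i) (\<alpha>' i)) (\<theta> i)"
    using le unfolding gg g'e le_simp by simp
  have "\<alpha> (\<gamma> j) \<le> \<alpha>' (\<gamma> j) \<and>
     c_comp C (\<theta>' (\<gamma> j)) (\<psi> j) = c_comp C (Ym (\<alpha> (\<gamma> j)) (\<alpha>' (\<gamma> j))) (c_comp C (\<theta> (\<gamma> j)) (\<psi> j))"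
    if j: "j \<le> l" for j
  proof -
    have c: "\<gamma> j \<le> m" using F(3) j by auto
    have a: "\<alpha> (\<gamma> j) \<le> \<alpha>' (\<gamma> j)" "\<alpha>' (\<gamma> j) \<le> n" using L G'(3) c by auto
    have ps: "\<psi> j \<in> c_arr C" using F(7) Cp_arr j by auto
    have th: "\<theta> (\<gamma> j) \<in> c_arr C" using G(7) Cp_arr c by auto
    have ym: "Ym (\<alpha> (\<gamma> j)) (\<alpha>' (\<gamma> j)) \<in> c_arr C" using Y(3) Cm_arr a by auto
    have "c_comp C (\<theta>' (\<gamma> j)) (\<psi> j) = c_comp C (c_comp C (Ym (\<alpha> (\<gamma> j)) (\<alpha>' (\<gamma> j))) (\<theta> (\<gamma> j))) (\<psi> j)"
      using L c by simp
    also have "\<dots> = c_comp C (Ym (\<alpha> (\<gamma> j)) (\<alpha>' (\<gamma> j))) (c_comp C (\<theta> (\<gamma> j)) (\<psi> j))"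
      using cat_assoc[OF cat ps th ym] F G Y a c j by auto
    finally show ?thesis using a by simp
  qed
  then show ?thesis unfolding fe g'e gg N_simps nerve_comp_simp le_simp by simp
qed

lemma qc_N: "qc N (nerve_le C)"
proof
  show "category N" by (rule N_category)
  show "\<And>f g. nerve_le C f g \<Longrightarrow> c_dom N f = c_dom N g \<and> c_cod N f = c_cod N g"
    using le_par N_simps by simp
qed (auto intro: le_congL le_congR)

end

locale rv = nv +
  assumes wf: "wfP (reedy_rel C Cm Cp)"
begin

lemma rr_irrefl: "\<not> reedy_rel C Cm Cp x x"
  using wfp_imp_irreflp[OF wf] unfolding irreflp_def by blast

lemma rr_asym: "reedy_rel C Cm Cp x y \<Longrightarrow> \<not> reedy_rel C Cm Cp y x"
  using wfp_imp_asymp[OF wf] by (meson asympD)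

lemma Cm_endo_id:
  assumes "f \<in> Cm" "c_dom C f = y" "c_cod C f = y" "y \<in> c_obj C"
  shows "f = c_id C y"
  using rr_irrefl[of y] assms unfolding reedy_rel_def by blast

lemma Cm_rel:
  assumes "f \<in> Cm" "c_dom C f = y" "c_cod C f = x" "x \<noteq> y" "x \<in> c_obj C" "y \<in> c_obj C"
  shows "reedy_rel C Cm Cp x y"
proof -
  have "f \<noteq> c_id C y" using assms cat_id[OF cat, of y] by auto
  then show ?thesis unfolding reedy_rel_def using assms by blast
qed

lemma block:
  assumes A: "nerve_obj C Cm (n, Xo, Xm)" and ijk: "i \<le> j" "j \<le> k" "k \<le> n" and eq: "Xo i = Xo k"
  shows "Xo j = Xo i"
proof (rule ccontr)
  assume ne: "Xo j \<noteq> Xo i"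
  note X = objD[OF A]
  have "reedy_rel C Cm Cp (Xo j) (Xo i)"
    using Cm_rel[OF X(3)[of i j]] X ijk ne by auto
  moreover have "reedy_rel C Cm Cp (Xo i) (Xo j)"
    using Cm_rel[OF X(3)[of j k]] X ijk ne eq by auto
  ultimately show False using rr_asym by blast
qed

lemma find_adj:
  assumes A: "nerve_obj C Cm (n, Xo, Xm)" and nr: "\<not> reflects_ids C (n, Xo, Xm)"
  shows "\<exists>i<n. Xo (Suc i) = Xo i \<and> Xm i (Suc i) = c_id C (Xo i)"
proof -
  note X = objD[OF A]
  from nr obtain i j y where ij: "i \<le> j" "j \<le> n" "y \<in> c_obj C" "Xm i j = c_id C y" "i \<noteq> j"
    unfolding reflects_ids_def by auto
  have "Xo i = y" "Xo j = y" using X(4)[of i j] X(5)[of i j] ij cat_id[OF cat] by auto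
  then have e: "Xo (Suc i) = Xo i" using block[OF A, of i "Suc i" j] ij by auto
  have "Xm i (Suc i) = c_id C (Xo i)"
    using Cm_endo_id[OF X(3)[of i "Suc i"]] X ij e by auto
  then show ?thesis using e ij by (intro exI[of _ i]) auto
qed

lemma contract:
  assumes A: "nerve_obj C Cm (n, Xo, Xm)" and i: "i < n" and e: "Xo (Suc i) = Xo i"
    and eid: "Xm i (Suc i) = c_id C (Xo i)"
  shows "\<exists>A' r s. nerve_obj C Cm A' \<and> fst A' = n - 1 \<and> r \<in> c_arr N \<and> s \<in> c_arr N \<and>
     c_dom N r = (n, Xo, Xm) \<and> c_cod N r = A' \<and> c_dom N s = A' \<and> c_cod N s = (n, Xo, Xm) \<and>
     nerve_le C (c_comp N s r) (c_id N (n, Xo, Xm)) \<and> c_comp N r s = c_id N A'"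
proof -
  note X = objD[OF A]
  define d where "d t = (if t \<le> i then t else Suc t)" for t
  define sg where "sg t = (if t \<le> i then t else t - 1)" for t
  define Xo' where "Xo' t = (if t \<le> n - 1 then Xo (d t) else undefined)" for t
  define Xm' where "Xm' a b = (if a \<le> b \<and> b \<le> n - 1 then Xm (d a) (d b) else undefined)" for a b
  have d1: "t \<le> n - 1 \<Longrightarrow> d t \<le> n" for t using i unfolding d_def by auto
  have d2: "a \<le> b \<Longrightarrow> d a \<le> d b" for a b unfolding d_def by auto
  have s1: "t \<le> n \<Longrightarrow> sg t \<le> n - 1" for t using i unfolding sg_def by auto
  have s2: "a \<le> b \<Longrightarrow> sg a \<le> sg b" for a b unfolding sg_def by auto
  have ds: "d (sg t) = (if t = Suc i then i else t)" for t unfolding d_def sg_def by auto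
  have sd: "sg (d t) = t" for t unfolding d_def sg_def by auto
  have dsle: "d (sg t) \<le> t" for t using ds[of t] by auto
  have Xods: "Xo (d (sg t)) = Xo t" for t using ds[of t] e by auto
  have Xmds: "Xm (d (sg a)) (d (sg b)) = Xm a b" if ab: "a \<le> b" "b \<le> n" for a b
  proof -
    have xi: "Xm i (Suc i) \<in> c_arr C" using X(3) i Cm_arr by auto
    consider "a \<noteq> Suc i" "b \<noteq> Suc i" | "a = Suc i" | "a \<noteq> Suc i" "b = Suc i" by blast
    then show ?thesis
    proof cases
      case 1 then show ?thesis using ds by simp
    next
      case 2
      then have "Xm i b = c_comp C (Xm (Suc i) b) (Xm i (Suc i))" using X(8)[of i "Suc i" b] ab by simp
      also have "\<dots> = Xm (Suc i) b" unfolding eid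
        using cat_idr[OF cat Cm_arr[OF X(3)[of "Suc i" b]]] X(4)[of "Suc i" b] ab 2 e by simp
      moreover have "Xm i i = Xm (Suc i) (Suc i)" using X(7)[of i] X(7)[of "Suc i"] e i by simp
      ultimately show ?thesis using 2 ds ab by simp
    next
      case 3
      then have a: "a \<le> i" using ab by simp
      have "Xm a (Suc i) = c_comp C (Xm i (Suc i)) (Xm a i)" using X(8)[of a i "Suc i"] a ab 3 by simp
      also have "\<dots> = Xm a i" unfolding eid
        using cat_idl[OF cat Cm_arr[OF X(3)[of a i]]] X(5)[of a i] a i by simp
      finally show ?thesis using 3 ds ab by simp
    qed
  qed
  define A' where "A' = (n - 1, Xo', Xm')"
  have A'obj: "nerve_obj C Cm A'"
    unfolding A'_def nerve_obj_def prod.case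
  proof (intro conjI allI impI, goal_cases)
    case (1 t) then show ?case using X d1 Xo'_def by simp
  next
    case (2 t) then show ?case using Xo'_def by simp
  next
    case (3 a b) then show ?case using X d1 d2 Xm'_def by simp
  next
    case (4 a b) then show ?case using X d1 d2 Xm'_def Xo'_def by simp
  next
    case (5 a b) then show ?case using X d1 d2 Xm'_def Xo'_def by simp
  next
    case (6 a b) then show ?case using Xm'_def by auto
  next
    case (7 t) then show ?case using X d1 Xm'_def Xo'_def by simp
  next
    case (8 a b c) then show ?case using X(8)[of "d a" "d b" "d c"] d1 d2 Xm'_def by simp
  qed
  define r where "r = ((n, Xo, Xm), A', (\<lambda>t. if t \<le> n then sg t else undefined),
     (\<lambda>t. if t \<le> n then c_id C (Xo t) else undefined))"
  define s where "s = (A', (n, Xo, Xm), (\<lambda>t. if t \<le> n - 1 then d t else undefined),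
     (\<lambda>t. if t \<le> n - 1 then c_id C (Xo (d t)) else undefined))"
  have r: "nerve_mor C Cm Cp r"
    unfolding r_def A'_def
  proof (rule morI)
    show "nerve_obj C Cm (n, Xo, Xm)" by fact
    show "nerve_obj C Cm (n - 1, Xo', Xm')" using A'obj A'_def by simp
    fix a b assume ab: "a \<le> b" "b \<le> n"
    have xm: "Xm a b \<in> c_arr C" using X(3) Cm_arr ab by auto
    show "c_comp C (Xm' (if a \<le> n then sg a else undefined) (if b \<le> n then sg b else undefined))
          (if a \<le> n then c_id C (Xo a) else undefined) = c_comp C (if b \<le> n then c_id C (Xo b) else undefined) (Xm a b)"
      using ab Xm'_def s1 s2 Xmds cat_idl[OF cat xm] cat_idr[OF cat xm] X by simp
  qed (insert s1 s2 Xods Cp_id X cat_id[OF cat] Xo'_def, auto)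
  have s: "nerve_mor C Cm Cp s"
    unfolding s_def A'_def
  proof (rule morI)
    show "nerve_obj C Cm (n, Xo, Xm)" by fact
    show "nerve_obj C Cm (n - 1, Xo', Xm')" using A'obj A'_def by simp
    fix a b assume ab: "a \<le> b" "b \<le> n - 1"
    have xm: "Xm (d a) (d b) \<in> c_arr C" using X(3) Cm_arr ab d1 d2 by auto
    show "c_comp C (Xm (if a \<le> n - 1 then d a else undefined) (if b \<le> n - 1 then d b else undefined))
          (if a \<le> n - 1 then c_id C (Xo (d a)) else undefined) =
         c_comp C (if b \<le> n - 1 then c_id C (Xo (d b)) else undefined) (Xm' a b)"
      using ab Xm'_def d1 d2 cat_idl[OF cat xm] cat_idr[OF cat xm] X by simp
  qed (insert d1 d2 Cp_id X cat_id[OF cat] Xo'_def, auto)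
  have rs: "c_comp N r s = c_id N A'"
    unfolding N_simps r_def s_def A'_def nerve_comp_simp nerve_id_simp
    using d1 sd X cat_id[OF cat] cat_idl[OF cat] Xo'_def by (auto simp: fun_eq_iff)
  have pt: "d (sg t) \<le> t \<and> c_id C (Xo t) = c_comp C (Xm (d (sg t)) t) (c_comp C (c_id C (Xo (d (sg t)))) (c_id C (Xo t)))"
    if t: "t \<le> n" for t
  proof -
    have "Xm (d (sg t)) t = c_id C (Xo t)"
      using ds[of t] eid e X(7) t by auto
    then show ?thesis
      using Xo'_def s1[OF t] Xods cat_id[OF cat] cat_idl[OF cat] X(1)[OF t] dsle by simp
  qed
  have sr: "nerve_le C (c_comp N s r) (c_id N (n, Xo, Xm))"
    unfolding N_simps r_def s_def A'_def nerve_comp_simp nerve_id_simp le_simp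
    using pt s1 by simp
  show ?thesis
    apply (rule exI[of _ A'], rule exI[of _ r], rule exI[of _ s])
    using A'obj r s rs sr unfolding N_simps by (simp add: A'_def r_def s_def)
qed

end

lemma iso_id:
  assumes D: "category D" and x: "x \<in> c_obj D"
  shows "iso_arr D (c_id D x)"
  unfolding iso_arr_def
  using cat_id[OF D x] cat_idl[OF D, of "c_id D x" x] by auto

lemma iso_comp:
  assumes D: "category D" and f: "iso_arr D f" and g: "iso_arr D g" and fg: "c_cod D f = c_dom D g"
  shows "iso_arr D (c_comp D g f)"
proof -
  obtain f' where f': "f \<in> c_arr D" "f' \<in> c_arr D" "c_dom D f' = c_cod D f" "c_cod D f' = c_dom D f"
    "c_comp D f' f = c_id D (c_dom D f)" "c_comp D f f' = c_id D (c_cod D f)"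
    using iso_arrE[OF f] by metis
  obtain g' where g': "g \<in> c_arr D" "g' \<in> c_arr D" "c_dom D g' = c_cod D g" "c_cod D g' = c_dom D g"
    "c_comp D g' g = c_id D (c_dom D g)" "c_comp D g g' = c_id D (c_cod D g)"
    using iso_arrE[OF g] by metis
  have gf: "c_comp D g f \<in> c_arr D" "c_dom D (c_comp D g f) = c_dom D f" "c_cod D (c_comp D g f) = c_cod D g"
    using cat_comp[OF D f'(1) g'(1) fg] by auto
  have fg': "c_comp D f' g' \<in> c_arr D" "c_dom D (c_comp D f' g') = c_cod D g" "c_cod D (c_comp D f' g') = c_dom D f"
    using cat_comp[OF D g'(2) f'(2)] f' g' fg by auto
  have "c_comp D (c_comp D f' g') (c_comp D g f) = c_comp D f' (c_comp D g' (c_comp D g f))"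
    using cat_assoc[OF D gf(1) g'(2) f'(2)] f' g' gf fg by auto
  also have "c_comp D g' (c_comp D g f) = c_comp D (c_comp D g' g) f"
    using cat_assoc[OF D f'(1) g'(1) g'(2)] f' g' fg by auto
  also have "\<dots> = f" using g'(5) fg[symmetric] cat_idl[OF D f'(1)] by simp
  finally have 1: "c_comp D (c_comp D f' g') (c_comp D g f) = c_id D (c_dom D (c_comp D g f))"
    using f' gf by simp
  have "c_comp D (c_comp D g f) (c_comp D f' g') = c_comp D g (c_comp D f (c_comp D f' g'))"
    using cat_assoc[OF D fg'(1) f'(1) g'(1)] f' g' fg' fg by auto
  also have "c_comp D f (c_comp D f' g') = c_comp D (c_comp D f f') g'"
    using cat_assoc[OF D g'(2) f'(2) f'(1)] f' g' fg by auto
  also have "\<dots> = g'" using f'(6) fg cat_idl[OF D g'(2)] g' by simp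
  finally have 2: "c_comp D (c_comp D g f) (c_comp D f' g') = c_id D (c_cod D (c_comp D g f))"
    using g' gf by simp
  show ?thesis unfolding iso_arr_def
    apply (rule conjI, rule gf(1))
    apply (rule bexI[of _ "c_comp D f' g'"])
    using gf fg' 1 2 by auto
qed

context nv
begin

abbreviation "P \<equiv> int_N_plus C Cm Cp"

lemma P_simps: "c_obj P = {A. nerve_obj C Cm A \<and> reflects_ids C A}"
  "c_arr P = {f \<in> c_arr N. c_dom N f \<in> c_obj P \<and> c_cod N f \<in> c_obj P}"
  "c_dom P = c_dom N" "c_cod P = c_cod N" "c_comp P = c_comp N" "c_id P = c_id N"
proof -
  have "nerve_mor C Cm Cp f \<Longrightarrow> nerve_obj C Cm (fst f) \<and> nerve_obj C Cm (fst (snd f))" for f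
    by (cases f rule: mor_split) (use morD in simp)
  then show "c_obj P = {A. nerve_obj C Cm A \<and> reflects_ids C A}"
  "c_arr P = {f \<in> c_arr N. c_dom N f \<in> c_obj P \<and> c_cod N f \<in> c_obj P}"
  "c_dom P = c_dom N" "c_cod P = c_cod N" "c_comp P = c_comp N" "c_id P = c_id N"
    unfolding int_N_plus_def int_N_def by (auto simp: fun_eq_iff)
qed

lemma P_category: "category P"
  by (rule fullsub_category[OF N_category]) (auto simp: P_simps N_simps)

lemma qc_P: "qc P (nerve_le C)"
proof
  show "category P" by (rule P_category)
  show "\<And>f g. nerve_le C f g \<Longrightarrow> c_dom P f = c_dom P g \<and> c_cod P f = c_cod P g"
    unfolding P_simps N_simps using le_par by blast
qed (auto simp: P_simps intro: le_congL le_congR)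

lemma agree:
  assumes f: "f \<in> c_arr P"
  shows "qcls P (nerve_le C) f = qcls N (nerve_le C) f"
proof -
  interpret qP: qc P "nerve_le C" by (rule qc_P)
  interpret qN: qc N "nerve_le C" by (rule qc_N)
  have sub: "c_arr P \<subseteq> c_arr N" using P_simps by auto
  have 1: "gen_equiv P (nerve_le C) \<subseteq> gen_equiv N (nerve_le C)"
    unfolding gen_equiv_def by (rule rtrancl_mono) (use sub in auto)
  have 2: "(f, g) \<in> gen_equiv P (nerve_le C)" if "(f, g) \<in> gen_equiv N (nerve_le C)" for g
    using that unfolding qN.R_def'
  proof (induction rule: rtrancl_induct)
    case base then show ?case by (rule qP.R_refl)
  next
    case (step y z)
    have y: "y \<in> c_arr P" using qP.R_par[OF step(3) f] by simp
    have "c_dom N y = c_dom N z \<and> c_cod N y = c_cod N z" using step(2) le_par[of y z] le_par[of z y]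
      unfolding N_simps by auto
    then have z: "z \<in> c_arr P" using step(2) y P_simps by auto
    have "(y, z) \<in> {(f, g). f \<in> c_arr P \<and> g \<in> c_arr P \<and> (nerve_le C f g \<or> nerve_le C g f)}"
      using y z step(2) by auto
    then show ?case using step(3) unfolding qP.R_def' by (rule rtrancl_into_rtrancl[rotated])
  qed
  show ?thesis unfolding qcls_def using 1 2 by blast
qed

end

context rv
begin

lemma ess_aux:
  "\<forall>A. nerve_obj C Cm A \<and> fst A = n \<longrightarrow> (\<exists>c \<in> c_obj P. \<exists>e. iso_arr (quot_cat N (nerve_le C)) e \<and>
     c_dom (quot_cat N (nerve_le C)) e = c \<and> c_cod (quot_cat N (nerve_le C)) e = A)"
proof (induction n rule: less_induct)
  case (less n)
  interpret qN: qc N "nerve_le C" by (rule qc_N)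
  show ?case
  proof (intro allI impI)
    fix A assume AA: "nerve_obj C Cm A \<and> fst A = n"
    obtain n' Xo Xm where Ae0: "A = (n', Xo, Xm)" by (rule prod_cases3)
    have Ae: "A = (n, Xo, Xm)" using AA Ae0 by simp
    have A: "nerve_obj C Cm (n, Xo, Xm)" using AA Ae by simp
    show "\<exists>c \<in> c_obj P. \<exists>e. iso_arr qN.Q e \<and> c_dom qN.Q e = c \<and> c_cod qN.Q e = A"
    proof (cases "reflects_ids C A")
      case True
      have AN: "A \<in> c_obj qN.Q" using AA qN.Q_simps(1) N_simps(1) by simp
      have AP: "A \<in> c_obj P" using True AA P_simps(1) by simp
      have "iso_arr qN.Q (c_id qN.Q A)" by (rule iso_id[OF qN.Q_category AN])
      moreover have "c_dom qN.Q (c_id qN.Q A) = A" "c_cod qN.Q (c_id qN.Q A) = A"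
        using cat_id[OF qN.Q_category AN] by simp_all
      ultimately show ?thesis using AP by blast
    next
      case False
      obtain i where i: "i < n" "Xo (Suc i) = Xo i" "Xm i (Suc i) = c_id C (Xo i)"
        using find_adj[OF A] False unfolding Ae by blast
      obtain A' r s where c: "nerve_obj C Cm A'" "fst A' = n - 1" "r \<in> c_arr N" "s \<in> c_arr N"
        "c_dom N r = A" "c_cod N r = A'" "c_dom N s = A'" "c_cod N s = A"
        "nerve_le C (c_comp N s r) (c_id N A)" "c_comp N r s = c_id N A'"
        using contract[OF A i] unfolding Ae[symmetric] by blast
      have lt: "n - 1 < n" using i by simp
      have "\<exists>c\<in>c_obj P. \<exists>e. iso_arr qN.Q e \<and> c_dom qN.Q e = c \<and> c_cod qN.Q e = A'"
        using less[OF lt] c(1,2) by blast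
      then obtain c0 e0 where e0: "c0 \<in> c_obj P" "iso_arr qN.Q e0" "c_dom qN.Q e0 = c0" "c_cod qN.Q e0 = A'"
        by blast
      have srN: "c_comp N s r \<in> c_arr N" using cat_comp(1)[OF N_category c(3) c(4)] c(6,7) by simp
      have idN: "c_id N A \<in> c_arr N" using cat_id(1)[OF N_category] AA N_simps(1) by simp
      have i1: "(c_comp N r s, c_id N (c_dom N s)) \<in> qN.R" unfolding c(10) c(7) by (rule qN.R_refl)
      have "(c_comp N s r, c_id N (c_dom N r)) \<in> {(f, g). f \<in> c_arr N \<and> g \<in> c_arr N \<and> (nerve_le C f g \<or> nerve_le C g f)}"
        unfolding c(5) using srN idN c(9) by simp
      then have i2: "(c_comp N s r, c_id N (c_dom N r)) \<in> qN.R" unfolding qN.R_def' by (rule r_into_rtrancl)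
      have cs: "c_cod N s = c_dom N r" "c_cod N r = c_dom N s" using c(5-8) by simp_all
      have iso_s: "iso_arr qN.Q (qcls N (nerve_le C) s)"
        by (rule qN.Q_iso[OF c(4) c(3) cs i1 i2])
      have ds: "c_dom qN.Q (qcls N (nerve_le C) s) = A'" "c_cod qN.Q (qcls N (nerve_le C) s) = A"
        using qN.Q_dom[OF c(4)] qN.Q_cod[OF c(4)] c(7,8) by simp_all
      have e0a: "e0 \<in> c_arr qN.Q" using e0(2) unfolding iso_arr_def by blast
      have sa: "qcls N (nerve_le C) s \<in> c_arr qN.Q" using iso_s unfolding iso_arr_def by blast
      have ce: "c_cod qN.Q e0 = c_dom qN.Q (qcls N (nerve_le C) s)" using e0(4) ds(1) by simp
      have "iso_arr qN.Q (c_comp qN.Q (qcls N (nerve_le C) s) e0)"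
        by (rule iso_comp[OF qN.Q_category e0(2) iso_s ce])
      moreover have "c_dom qN.Q (c_comp qN.Q (qcls N (nerve_le C) s) e0) = c0"
        "c_cod qN.Q (c_comp qN.Q (qcls N (nerve_le C) s) e0) = A"
        using cat_comp[OF qN.Q_category e0a sa ce] e0(3) ds(2) by simp_all
      ultimately show ?thesis using e0(1) by blast
    qed
  qed
qed

end

lemma reedy_rv: "reedy C Cm Cp \<Longrightarrow> rv C Cm Cp"
  unfolding reedy_def rv_def rv_axioms_def nv_def by blast

theorem lemma6p2:
  fixes C :: "('o, 'm) cat" and Cm Cp :: "'m set"
  assumes "reedy C Cm Cp"
  shows "equivalence (Down C Cm Cp) (Down_star C Cm Cp) (\<lambda>A. A) (Down_incl_mor C Cm Cp)"
proof -
  interpret rv C Cm Cp by (rule reedy_rv[OF assms])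
  interpret qN: qc N "nerve_le C" by (rule qc_N)
  interpret qP: qc P "nerve_le C" by (rule qc_P)
  have DS: "Down_star C Cm Cp = qN.Q" unfolding Down_star_def ..
  have DD: "Down C Cm Cp = qP.Q" unfolding Down_def ..
  have Parr: "(SOME h. h \<in> qcls P (nerve_le C) f) \<in> c_arr P" if f: "f \<in> c_arr P" for f
    using qP.R_par[OF qP.R_sym[OF qP.some_qcls[of f]] f] by simp
  have Pcls: "qcls P (nerve_le C) (SOME h. h \<in> qcls P (nerve_le C) f) = qcls P (nerve_le C) f" for f
    using qP.qcls_eq_iff qP.some_qcls by blast
  show ?thesis unfolding DS DD
  proof (rule fullsub_equivalence)
    show "category qN.Q" by (rule qN.Q_category)
    show "c_obj qP.Q \<subseteq> c_obj qN.Q" using qP.Q_simps qN.Q_simps P_simps N_simps by auto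
    show "c_dom qP.Q = c_dom qN.Q" "c_cod qP.Q = c_cod qN.Q"
      by (simp_all add: quot_cat_def P_simps)
    show "c_arr qP.Q = {f \<in> c_arr qN.Q. c_dom qN.Q f \<in> c_obj qP.Q \<and> c_cod qN.Q f \<in> c_obj qP.Q}"
    proof (intro equalityI subsetI)
      fix E assume "E \<in> c_arr qP.Q"
      then obtain f where f: "f \<in> c_arr P" "E = qcls P (nerve_le C) f" using qP.Q_arr_iff by blast
      have fN: "f \<in> c_arr N" using f P_simps by auto
      show "E \<in> {f \<in> c_arr qN.Q. c_dom qN.Q f \<in> c_obj qP.Q \<and> c_cod qN.Q f \<in> c_obj qP.Q}"
        using f agree[OF f(1)] qN.Q_dom[OF fN] qN.Q_cod[OF fN] qN.Q_simps(2) fN P_simps qP.Q_simps(1) by auto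
    next
      fix E assume E: "E \<in> {f \<in> c_arr qN.Q. c_dom qN.Q f \<in> c_obj qP.Q \<and> c_cod qN.Q f \<in> c_obj qP.Q}"
      then obtain f where f: "f \<in> c_arr N" "E = qcls N (nerve_le C) f" using qN.Q_arr_iff by blast
      have fP: "f \<in> c_arr P" using E f qN.Q_dom[OF f(1)] qN.Q_cod[OF f(1)] P_simps qP.Q_simps(1) by auto
      show "E \<in> c_arr qP.Q" using agree[OF fP] f fP qP.Q_simps(2) by auto
    qed
    show "\<forall>f\<in>c_arr qP.Q. \<forall>g\<in>c_arr qP.Q. c_cod qN.Q f = c_dom qN.Q g \<longrightarrow> c_comp qP.Q g f = c_comp qN.Q g f"
    proof (intro ballI impI)
      fix E F assume E: "E \<in> c_arr qP.Q" and F: "F \<in> c_arr qP.Q" and EF: "c_cod qN.Q E = c_dom qN.Q F"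
      obtain f where f: "f \<in> c_arr P" "E = qcls P (nerve_le C) f" using E qP.Q_arr_iff by blast
      obtain g where g: "g \<in> c_arr P" "F = qcls P (nerve_le C) g" using F qP.Q_arr_iff by blast
      have fg: "c_cod P f = c_dom P g" using EF f g agree qN.Q_dom qN.Q_cod P_simps by auto
      have "c_comp qP.Q F E = qcls P (nerve_le C) (c_comp P g f)" using qP.Q_comp[OF f(1) g(1) fg] f g by simp
      also have "\<dots> = qcls N (nerve_le C) (c_comp N g f)"
        using agree[OF cat_comp(1)[OF P_category f(1) g(1) fg]] P_simps by simp
      also have "\<dots> = c_comp qN.Q F E"
        using qN.Q_comp[of f g] f g fg agree P_simps by auto
      finally show "c_comp qP.Q F E = c_comp qN.Q F E" .
    qed
    show "\<forall>x\<in>c_obj qP.Q. c_id qP.Q x = c_id qN.Q x"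
      using agree cat_id[OF P_category] qP.Q_simps qN.Q_simps P_simps by auto
    show "\<forall>f\<in>c_arr qP.Q. Down_incl_mor C Cm Cp f = f"
    proof
      fix E assume "E \<in> c_arr qP.Q"
      then obtain f where f: "f \<in> c_arr P" "E = qcls P (nerve_le C) f" using qP.Q_arr_iff by blast
      have "Down_incl_mor C Cm Cp E = qcls N (nerve_le C) (SOME h. h \<in> qcls P (nerve_le C) f)"
        unfolding Down_incl_mor_def f(2) ..
      also have "\<dots> = qcls P (nerve_le C) (SOME h. h \<in> qcls P (nerve_le C) f)"
        using agree[OF Parr[OF f(1)]] by simp
      also have "\<dots> = E" using Pcls f by simp
      finally show "Down_incl_mor C Cm Cp E = E" .
    qed
    show "\<forall>d\<in>c_obj qN.Q. \<exists>c\<in>c_obj qP.Q. \<exists>e. iso_arr qN.Q e \<and> c_dom qN.Q e = c \<and> c_cod qN.Q e = d"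
      using ess_aux qN.Q_simps(1) qP.Q_simps(1) N_simps by auto
  qed
qed

end
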